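(* Let $(G,s,t)$ be an oriented serial superedge with principal subgraphs $(G_1,s_1,t_1),\dots,(G_k,s_k,t_k)$ (so $s_1=s$, $t_i=s_{i+1}$, $t_k=t$), each $G_i$ non-serial. For each $i$ let $\mathcal{T}_i\subseteq\mathsf{ST}(G_i)$ contain exactly one spanning tree from each orbit of $\mathsf{ST}(G_i)$ under $\mathrm{Aut}_{\mathrm{or}}(G_i,s_i,t_i)$. Then the set $\{T_1\cup\dots\cup T_k : T_i\in\mathcal{T}_i\text{ for }1\le i\le k\}$ consists of spanning trees of $G$ and contains exactly one spanning tree from each orbit of $\mathsf{ST}(G)$ under $\mathrm{Aut}_{\mathrm{or}}(G,s,t)$.
   Context: All graphs are finite, simple and undirected. An oriented series-parallel graph is a triple $(G,s,t)$ where $G$ is a graph and $s\neq t$ are vertices, defined recursively: (i) $G$ is a single edge with vertex set $\{s,t\}$; or (ii) (serial superedge) there are $k\ge 2$ oriented series-parallel graphs $(G_1,s_1,t_1),\dots,(G_k,s_k,t_k)$ with $s_1=s$, $t_k=t$, $t_i=s_{i+1}$ for $1\le i<k$, $V(G_i)\cap V(G_{i+1})=\{s_{i+1}\}$, $V(G_i)\cap V(G_j)=\emptyset$ for $|i-j|\ge2$, and $G=G_1\cup\dots\cup G_k$; or (iii) (parallel superedge) there are $k\ge2$ oriented series-parallel graphs $(G_1,s,t),\dots,(G_k,s,t)$ with $V(G_i)\cap V(G_j)=\{s,t\}$ for $i\neq j$ and $G=G_1\cup\dots\cup G_k$. The $G_i$ are the principal subgraphs. A graph is non-serial if it is not a serial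 superedge. For an oriented series-parallel graph $(H,u,v)$, $\mathrm{Aut}_{\mathrm{or}}(H,u,v)$ is the group of automorphisms of $H$ fixing $u$ and $v$, acting on subgraphs of $H$; $\mathsf{ST}(H)$ is the set of spanning trees of $H$. Two subgraphs $A,B$ are in the same orbit iff $A=\sigma(B)$ for some $\sigma$ in the group. *)

theory Defs
  imports Main
begin

text \<open>Graphs are represented by a vertex set V and an edge set E of unordered
pairs (two-element sets) of vertices. Subgraphs (in particular spanning trees)
are represented by their edge sets.\<close>

definition serial_conds ::
  "nat \<Rightarrow> (nat \<Rightarrow> 'a set) \<Rightarrow> (nat \<Rightarrow> 'a) \<Rightarrow> (nat \<Rightarrow> 'a) \<Rightarrow> 'a \<Rightarrow> 'a \<Rightarrow> bool" where
  "serial_conds k Vs ss ts s t \<longleftrightarrow>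
     ss 0 = s \<and> ts (k - 1) = t \<and>
     (\<forall>i. i + 1 < k \<longrightarrow> ts i = ss (i + 1)) \<and>
     (\<forall>i. i + 1 < k \<longrightarrow> Vs i \<inter> Vs (i + 1) = {ss (i + 1)}) \<and>
     (\<forall>i<k. \<forall>j<k. i + 2 \<le> j \<longrightarrow> Vs i \<inter> Vs j = {})"

inductive osp :: "'a set \<Rightarrow> 'a set set \<Rightarrow> 'a \<Rightarrow> 'a \<Rightarrow> bool" where
  edge: "(s::'a) \<noteq> t \<Longrightarrow> osp {s, t} {{s, t}} s t"
| serial: "\<lbrakk>2 \<le> (k::nat); \<forall>i<k. osp (Vs i :: 'a set) (Es i) (ss i) (ts i);
            serial_conds k Vs ss ts s t\<rbrakk>
           \<Longrightarrow> osp (\<Union>i<k. Vs i) (\<Union>i<k. Es i) s t"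
| parallel: "\<lbrakk>2 \<le> (k::nat); \<forall>i<k. osp (Vs i :: 'a set) (Es i) s t;
              \<forall>i<k. \<forall>j<k. i \<noteq> j \<longrightarrow> Vs i \<inter> Vs j = {s, t}\<rbrakk>
           \<Longrightarrow> osp (\<Union>i<k. Vs i) (\<Union>i<k. Es i) s t"

definition serial_superedge :: "'a set \<Rightarrow> 'a set set \<Rightarrow> 'a \<Rightarrow> 'a \<Rightarrow> bool" where
  "serial_superedge V E s t \<longleftrightarrow>
     (\<exists>k Vs Es ss ts. 2 \<le> k \<and> (\<forall>i<k. osp (Vs i) (Es i) (ss i) (ts i)) \<and>
        serial_conds k Vs ss ts s t \<and>
        V = (\<Union>i<k. Vs i) \<and> E = (\<Union>i<k. Es i))"

fun walk :: "'a set set \<Rightarrow> 'a list \<Rightarrow> bool" where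
  "walk E [] = False"
| "walk E [x] = True"
| "walk E (x # y # xs) = ({x, y} \<in> E \<and> walk E (y # xs))"

definition connected_on :: "'a set \<Rightarrow> 'a set set \<Rightarrow> bool" where
  "connected_on V E \<longleftrightarrow>
     (\<forall>x\<in>V. \<forall>y\<in>V. \<exists>xs. walk E xs \<and> hd xs = x \<and> last xs = y \<and> set xs \<subseteq> V)"

definition is_cycle :: "'a set set \<Rightarrow> 'a list \<Rightarrow> bool" where
  "is_cycle E xs \<longleftrightarrow> 3 \<le> length xs \<and> distinct xs \<and> walk E xs \<and> {last xs, hd xs} \<in> E"

definition acyclic_graph :: "'a set set \<Rightarrow> bool" where
  "acyclic_graph E \<longleftrightarrow> \<not> (\<exists>xs. is_cycle E xs)"

definition spanning_trees :: "'a set \<Rightarrow> 'a set set \<Rightarrow> 'a set set set" where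
  "spanning_trees V E = {T. T \<subseteq> E \<and> connected_on V T \<and> acyclic_graph T}"

definition aut_or :: "'a set \<Rightarrow> 'a set set \<Rightarrow> 'a \<Rightarrow> 'a \<Rightarrow> ('a \<Rightarrow> 'a) set" where
  "aut_or V E u v = {\<sigma>. bij_betw \<sigma> V V \<and>
      (\<forall>x\<in>V. \<forall>y\<in>V. {x, y} \<in> E \<longleftrightarrow> {\<sigma> x, \<sigma> y} \<in> E) \<and> \<sigma> u = u \<and> \<sigma> v = v}"

definition act :: "('a \<Rightarrow> 'a) \<Rightarrow> 'a set set \<Rightarrow> 'a set set" where
  "act \<sigma> T = (\<lambda>e. \<sigma> ` e) ` T"

definition orbit :: "('a \<Rightarrow> 'a) set \<Rightarrow> 'a set set \<Rightarrow> 'a set set set" where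
  "orbit Grp T = {act \<sigma> T | \<sigma>. \<sigma> \<in> Grp}"

definition orbit_transversal ::
  "('a \<Rightarrow> 'a) set \<Rightarrow> 'a set set set \<Rightarrow> 'a set set set \<Rightarrow> bool" where
  "orbit_transversal Grp S R \<longleftrightarrow>
     R \<subseteq> S \<and> (\<forall>T\<in>S. \<exists>!T'. T' \<in> R \<and> T' \<in> orbit Grp T)"

end

theory Submission
  imports Defs
begin

lemma walk_nonempty: "walk F xs \<Longrightarrow> xs \<noteq> []"
  by (cases xs) auto

lemma walk_Cons: "walk F (x # xs) \<longleftrightarrow> (xs = [] \<or> ({x, hd xs} \<in> F \<and> walk F xs))"
  by (cases xs) auto

lemma walk_append:
  "xs \<noteq> [] \<Longrightarrow> ys \<noteq> [] \<Longrightarrow>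
   walk F (xs @ ys) \<longleftrightarrow> walk F xs \<and> walk F ys \<and> {last xs, hd ys} \<in> F"
proof (induction xs)
  case Nil then show ?case by simp
next
  case (Cons x xs)
  show ?case
  proof (cases "xs = []")
    case True
    then show ?thesis using Cons.prems by (cases ys) auto
  next
    case False
    then show ?thesis using Cons by (cases xs) auto
  qed
qed

lemma walk_single[simp]: "walk F [x]" by simp

lemma walk_rev: "walk F xs \<Longrightarrow> walk F (rev xs)"
proof (induction xs)
  case Nil then show ?case by simp
next
  case (Cons x xs)
  show ?case
  proof (cases "xs = []")
    case True then show ?thesis by simp
  next
    case False
    with Cons have "walk F xs" "{x, hd xs} \<in> F" by (auto simp: walk_Cons)
    then show ?thesis using Cons False
      by (subst rev.simps, subst walk_append) (auto simp: last_rev insert_commute)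
  qed
qed

lemma walk_mono_gen:
  "walk F xs \<Longrightarrow> (\<forall>x\<in>set xs. \<forall>y\<in>set xs. {x,y} \<in> F \<longrightarrow> {x,y} \<in> F') \<Longrightarrow> walk F' xs"
  by (induction F xs rule: walk.induct) auto

lemma walk_mono: "walk F xs \<Longrightarrow> F \<subseteq> F' \<Longrightarrow> walk F' xs"
  using walk_mono_gen by blast

lemma walk_map:
  assumes "walk F xs" "\<forall>x\<in>set xs. \<forall>y\<in>set xs. {x,y} \<in> F \<longrightarrow> {f x, f y} \<in> F'"
  shows "walk F' (map f xs)"
  using assms by (induction F xs rule: walk.induct) auto

lemma walk_edges_set:
  "walk F xs \<Longrightarrow> {x, y} \<in> F \<Longrightarrow> x \<in> set xs \<Longrightarrow> True" by simp

lemma walk_split: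
  assumes "walk F (as @ z # bs)"
  shows "walk F (as @ [z])" "walk F (z # bs)"
proof -
  show "walk F (as @ [z])"
  proof (cases "as = []")
    case False
    then show ?thesis using assms walk_append[of as "z # bs" F] walk_append[of as "[z]" F] by simp
  qed simp
  show "walk F (z # bs)"
  proof (cases "as = []")
    case True then show ?thesis using assms by simp
  next
    case False
    then show ?thesis using assms walk_append[of as "z # bs" F] by simp
  qed
qed

lemma crossing:
  assumes "walk F xs" "hd xs \<in> L" "last xs \<notin> L"
    and "\<forall>x y. {x,y} \<in> F \<longrightarrow> x \<in> L \<longrightarrow> y \<notin> L \<longrightarrow> x = c"
  shows "c \<in> set xs"
  using assms by (induction F xs rule: walk.induct) (auto split: if_splits)

definition reach :: "'a set set \<Rightarrow> 'a set \<Rightarrow> 'a \<Rightarrow> 'a \<Rightarrow> bool" where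
  "reach F A x y \<longleftrightarrow> (\<exists>xs. walk F xs \<and> hd xs = x \<and> last xs = y \<and> set xs \<subseteq> A)"

lemma reach_refl: "x \<in> A \<Longrightarrow> reach F A x x"
  unfolding reach_def by (rule exI[of _ "[x]"]) auto

lemma reach_in: "reach F A x y \<Longrightarrow> x \<in> A \<and> y \<in> A"
  unfolding reach_def by (metis hd_in_set last_in_set subsetD walk_nonempty)

lemma reach_sym: "reach F A x y \<Longrightarrow> reach F A y x"
  unfolding reach_def
  by (metis hd_rev last_rev set_rev walk_rev)

lemma walk_join:
  assumes "walk F xs" "walk F ys" "last xs = hd ys"
  shows "walk F (xs @ tl ys)"
proof (cases "tl ys = []")
  case True then show ?thesis using assms by simp
next
  case False
  from assms(2) False obtain y z zs where ys: "ys = y # z # zs"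
    by (metis list.collapse walk_nonempty)
  show ?thesis using assms walk_nonempty[OF assms(1)] unfolding ys
    by (subst walk_append) auto
qed

lemma reach_trans: "reach F A x y \<Longrightarrow> reach F A y z \<Longrightarrow> reach F A x z"
  unfolding reach_def
proof (elim exE conjE)
  fix xs ys
  assume a: "walk F xs" "hd xs = x" "last xs = y" "set xs \<subseteq> A"
     "walk F ys" "hd ys = y" "last ys = z" "set ys \<subseteq> A"
  have ne: "xs \<noteq> []" "ys \<noteq> []" using a walk_nonempty by auto
  have "walk F (xs @ tl ys)" using walk_join a by metis
  moreover have "hd (xs @ tl ys) = x" using a ne by simp
  moreover have "last (xs @ tl ys) = z" using a ne
    by (cases ys) auto
  moreover have "set (xs @ tl ys) \<subseteq> A" using a ne
    by (cases ys) auto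
  ultimately show "\<exists>xs. walk F xs \<and> hd xs = x \<and> last xs = z \<and> set xs \<subseteq> A" by blast
qed

lemma reach_mono: "reach F A x y \<Longrightarrow> F \<subseteq> F' \<Longrightarrow> A \<subseteq> A' \<Longrightarrow> reach F' A' x y"
  unfolding reach_def using walk_mono by blast

lemma reach_chain:
  "(\<forall>i<n. reach F A (u i) (u (Suc i))) \<Longrightarrow> u 0 \<in> A \<Longrightarrow> reach F A (u 0) (u n)"
  by (induction n) (auto intro: reach_refl reach_trans)

lemma connected_on_reach: "connected_on V F \<longleftrightarrow> (\<forall>x\<in>V. \<forall>y\<in>V. reach F V x y)"
  unfolding connected_on_def reach_def by blast

lemma reach_distinct:
  assumes "reach F A x y"
  shows "\<exists>xs. walk F xs \<and> distinct xs \<and> hd xs = x \<and> last xs = y \<and> set xs \<subseteq> A"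
proof -
  obtain xs where xs: "walk F xs" "hd xs = x" "last xs = y" "set xs \<subseteq> A"
    using assms unfolding reach_def by blast
  then show ?thesis
  proof (induction "length xs" arbitrary: xs rule: less_induct)
    case less
    show ?case
    proof (cases "distinct xs")
      case True then show ?thesis using less.prems by blast
    next
      case False
      then obtain as z bs cs where d: "xs = as @ [z] @ bs @ [z] @ cs"
        using not_distinct_decomp by blast
      let ?ys = "as @ z # cs"
      have w1: "walk F (as @ [z])" and w2: "walk F (z # cs)"
        using walk_split[of F as z "bs @ [z] @ cs"] walk_split[of F "as @ [z] @ bs" z cs]
          less.prems(1) unfolding d by auto
      have "walk F ?ys" using walk_join[OF w1 w2] by simp
      moreover have "hd ?ys = x" using less.prems(2) d by (cases as) auto
      moreover have "last ?ys = y" using less.prems(3) d by (cases cs) auto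
      moreover have "set ?ys \<subseteq> A" using less.prems(4) d by auto
      moreover have "length ?ys < length xs" using d by simp
      ultimately show ?thesis using less.hyps by blast
    qed
  qed
qed

lemma path_gate:
  assumes w: "walk F xs" and d: "distinct xs"
    and h: "hd xs \<notin> L \<or> hd xs = c" and l: "last xs \<notin> L \<or> last xs = c"
    and cL: "c \<in> L"
    and cond: "\<forall>x y. {x,y} \<in> F \<longrightarrow> x \<in> L \<longrightarrow> y \<notin> L \<longrightarrow> x = c"
  shows "set xs \<inter> L \<subseteq> {c}"
proof
  fix z assume z: "z \<in> set xs \<inter> L"
  show "z \<in> {c}"
  proof (rule ccontr)
    assume zc: "z \<notin> {c}"
    obtain as bs where xs: "xs = as @ z # bs" using z split_list by fastforce
    have wa: "walk F (as @ [z])" and wb: "walk F (z # bs)"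
      using walk_split[of F as z bs] w xs by auto
    have "c \<in> set as"
    proof (cases as)
      case Nil then show ?thesis using h xs z zc by auto
    next
      case (Cons a as')
      show ?thesis
      proof (cases "hd xs = c")
        case True then show ?thesis using xs Cons by simp
      next
        case False
        with h have "hd xs \<notin> L" by simp
        have "c \<in> set (rev (as @ [z]))"
          by (rule crossing[OF walk_rev[OF wa] _ _ cond])
             (use z \<open>hd xs \<notin> L\<close> xs Cons in \<open>auto simp: last_rev hd_rev\<close>)
        then show ?thesis using zc by auto
      qed
    qed
    moreover have "c \<in> set bs"
    proof (cases bs rule: rev_cases)
      case Nil then show ?thesis using l xs z zc by auto
    next
      case (snoc bs' b)
      show ?thesis
      proof (cases "last xs = c")
        case True then show ?thesis using xs snoc by simp
      next
        case False
        with l have "last xs \<notin> L" by simp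
        have "c \<in> set (z # bs)"
          by (rule crossing[OF wb _ _ cond])
             (use z \<open>last xs \<notin> L\<close> xs snoc in auto)
        then show ?thesis using zc by auto
      qed
    qed
    ultimately show False using d xs by auto
  qed
qed

lemma cycle_rotate1: "is_cycle F xs \<Longrightarrow> is_cycle F (rotate1 xs)"
proof -
  assume c: "is_cycle F xs"
  then obtain x ys where xs: "xs = x # ys" and ne: "ys \<noteq> []"
    unfolding is_cycle_def by (cases xs; cases "tl xs") auto
  have "walk F ys" "{x, hd ys} \<in> F" using c ne unfolding xs is_cycle_def by (auto simp: walk_Cons)
  moreover have "{last ys, x} \<in> F" using c ne unfolding xs is_cycle_def by auto
  ultimately have "walk F (ys @ [x])" using ne by (subst walk_append) auto
  then show ?thesis using c ne \<open>{x, hd ys} \<in> F\<close> unfolding xs is_cycle_def by (auto simp: insert_commute)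
qed

lemma cycle_rotate: "is_cycle F xs \<Longrightarrow> is_cycle F (rotate n xs)"
  by (induction n) (auto simp: cycle_rotate1)

lemma cycle_gate:
  assumes cy: "is_cycle F xs" and z: "z \<in> set xs" "z \<notin> L"
    and cL: "c \<in> L"
    and cond: "\<forall>x y. {x,y} \<in> F \<longrightarrow> x \<in> L \<longrightarrow> y \<notin> L \<longrightarrow> x = c"
  shows "set xs \<inter> L \<subseteq> {c}"
proof -
  obtain q where q: "q < length xs" "xs ! q = z" using z by (metis in_set_conv_nth)
  let ?ys = "rotate q xs"
  have cy2: "is_cycle F ?ys" using cycle_rotate cy by blast
  have hy: "hd ?ys = z" using q hd_rotate_conv_nth[of xs q] by (cases xs) auto
  have "last ?ys \<notin> L \<or> last ?ys = c"
    using cy2 cond hy z unfolding is_cycle_def by blast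
  then have "set ?ys \<inter> L \<subseteq> {c}"
    using path_gate[of F ?ys L c] cy2 hy z cL cond unfolding is_cycle_def by blast
  then show ?thesis by simp
qed


lemma walk_set_edges: "walk F xs \<Longrightarrow> 2 \<le> length xs \<Longrightarrow> x \<in> set xs \<Longrightarrow> \<exists>e\<in>F. x \<in> e"
  by (induction F xs rule: walk.induct) (auto simp: walk_Cons, metis insertI1 length_Cons list.sel(1) list.set_cases list.size(3) neq_Nil_conv numeral_2_eq_2 Suc_le_mono le0 walk_nonempty insert_commute)

locale ser =
  fixes k :: nat and Vs :: "nat \<Rightarrow> 'a set" and Es :: "nat \<Rightarrow> 'a set set"
    and ss ts :: "nat \<Rightarrow> 'a" and s t :: 'a
  assumes k2: "2 \<le> k"
    and comp: "\<And>i. i < k \<Longrightarrow> ss i \<in> Vs i \<and> ts i \<in> Vs i \<and> ss i \<noteq> ts i \<and>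
        (\<forall>e\<in>Es i. \<exists>x y. e = {x,y} \<and> x \<noteq> y \<and> x \<in> Vs i \<and> y \<in> Vs i)"
    and sc: "serial_conds k Vs ss ts s t"
begin

abbreviation V where "V \<equiv> \<Union>i<k. Vs i"
abbreviation E where "E \<equiv> \<Union>i<k. Es i"
definition Left where "Left j = (\<Union>i\<in>{..j}. Vs i)"
definition Right where "Right j = (\<Union>i\<in>{j..<k}. Vs i)"

lemma ss0: "ss 0 = s" using sc unfolding serial_conds_def by auto
lemma tsk: "ts (k-1) = t" using sc unfolding serial_conds_def by auto
lemma ts_ss: "i+1 < k \<Longrightarrow> ts i = ss (i+1)" using sc unfolding serial_conds_def by auto
lemma inter1: "i+1 < k \<Longrightarrow> Vs i \<inter> Vs (i+1) = {ss (i+1)}" using sc unfolding serial_conds_def by auto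
lemma disj: "i < k \<Longrightarrow> j < k \<Longrightarrow> i+2 \<le> j \<Longrightarrow> Vs i \<inter> Vs j = {}"
  using sc unfolding serial_conds_def by auto
lemma ss_in: "i < k \<Longrightarrow> ss i \<in> Vs i" using comp by blast
lemma ts_in: "i < k \<Longrightarrow> ts i \<in> Vs i" using comp by blast
lemma ss_ne_ts: "i < k \<Longrightarrow> ss i \<noteq> ts i" using comp by blast
lemma edge_in: "i < k \<Longrightarrow> e \<in> Es i \<Longrightarrow> \<exists>x y. e = {x,y} \<and> x \<noteq> y \<and> x \<in> Vs i \<and> y \<in> Vs i"
  using comp by blast
lemma ss_pred: "0 < i \<Longrightarrow> i < k \<Longrightarrow> ss i = ts (i-1)" using ts_ss[of "i-1"] by simp
lemma ts_in2: "i+1 < k \<Longrightarrow> ts i \<in> Vs (i+1)" using ts_ss ss_in by simp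

lemma inter_gate:
  assumes "i < j" "j < k" "x \<in> Vs i" "x \<in> Vs j"
  shows "j = i+1 \<and> x = ts i"
proof (cases "j = i+1")
  case True then show ?thesis using inter1[of i] assms ts_ss[of i] by auto
next
  case False then have "i+2 \<le> j" using assms by simp
  then show ?thesis using disj[of i j] assms by auto
qed

lemma gate2:
  assumes "i < k" "j < k" "i \<noteq> j" "x \<in> Vs i" "x \<in> Vs j"
  shows "x = ss i \<or> x = ts i"
proof (cases "i < j")
  case True then show ?thesis using inter_gate[of i j x] assms by auto
next
  case False then have "j < i" using assms by simp
  then show ?thesis using inter_gate[of j i x] assms ts_ss[of j] by auto
qed

lemma EsE:
  assumes "i < k" "x \<in> Vs i" "y \<in> Vs i"
  shows "{x,y} \<in> E \<longleftrightarrow> {x,y} \<in> Es i"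
proof
  assume "{x,y} \<in> E"
  then obtain m where m: "m < k" "{x,y} \<in> Es m" by auto
  then obtain a b where ab: "{x,y} = {a,b}" "a \<noteq> b" "a \<in> Vs m" "b \<in> Vs m" using edge_in by blast
  then have xy: "x \<noteq> y" "x \<in> Vs m" "y \<in> Vs m" by (auto simp: doubleton_eq_iff)
  show "{x,y} \<in> Es i"
  proof (cases "m = i")
    case True then show ?thesis using m by simp
  next
    case False
    then have "m < i \<or> i < m" by auto
    then show ?thesis
    proof
      assume "m < i" then show ?thesis using inter_gate[of m i x] inter_gate[of m i y] xy assms by auto
    next
      assume "i < m" then show ?thesis using inter_gate[of i m x] inter_gate[of i m y] xy assms m by auto
    qed
  qed
next
  assume "{x,y} \<in> Es i" then show "{x,y} \<in> E" using assms by auto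
qed

lemma Es_disj:
  assumes "i < k" "j < k" "i \<noteq> j" shows "Es i \<inter> Es j = {}"
proof (rule ccontr)
  assume "Es i \<inter> Es j \<noteq> {}"
  then obtain e where e: "e \<in> Es i" "e \<in> Es j" by blast
  obtain x y where xy: "e = {x,y}" "x \<noteq> y" "x \<in> Vs i" "y \<in> Vs i" using edge_in e assms by blast
  have "{x,y} \<in> Es i" using xy e by simp
  moreover have "{x,y} \<in> E" using e xy assms by auto
  then have "{x,y} \<in> Es j"
    using e xy by simp
  then obtain a b where "{x,y} = {a,b}" "a \<in> Vs j" "b \<in> Vs j" using edge_in assms by blast
  then have "x \<in> Vs j" "y \<in> Vs j" by (auto simp: doubleton_eq_iff)
  then have "x = ss i \<or> x = ts i" "y = ss i \<or> y = ts i" using gate2 assms xy by blast+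
  moreover have "x = ss j \<or> x = ts j" "y = ss j \<or> y = ts j"
    using gate2[of j i] assms xy \<open>x \<in> Vs j\<close> \<open>y \<in> Vs j\<close> by auto
  ultimately show False
  proof -
    have "i < j \<or> j < i" using assms by auto
    then show False
    proof
      assume "i < j" then show False using inter_gate[of i j x] inter_gate[of i j y] xy assms \<open>x \<in> Vs j\<close> \<open>y \<in> Vs j\<close> by auto
    next
      assume "j < i" then show False using inter_gate[of j i x] inter_gate[of j i y] xy assms \<open>x \<in> Vs j\<close> \<open>y \<in> Vs j\<close> by auto
    qed
  qed
qed

lemma edge_E: "e \<in> E \<Longrightarrow> \<exists>i<k. \<exists>x y. e = {x,y} \<and> x \<noteq> y \<and> x \<in> Vs i \<and> y \<in> Vs i"
  using edge_in by blast

lemma edge_E2: "{x,y} \<in> E \<Longrightarrow> \<exists>i<k. x \<in> Vs i \<and> y \<in> Vs i \<and> x \<noteq> y \<and> {x,y} \<in> Es i"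
proof -
  assume "{x,y} \<in> E"
  then obtain i where i: "i < k" "{x,y} \<in> Es i" by auto
  then obtain a b where "{x,y} = {a,b}" "a \<noteq> b" "a \<in> Vs i" "b \<in> Vs i" using edge_in by blast
  then show ?thesis using i by (auto simp: doubleton_eq_iff)
qed

lemma k1: "0 < k" using k2 by simp

lemma s_in: "s \<in> Vs 0" using ss_in[of 0] ss0 k1 by simp
lemma t_in: "t \<in> Vs (k-1)" using ts_in[of "k-1"] tsk k1 by simp

lemma s_ne_t: "s \<noteq> t"
proof
  assume "s = t"
  then have "k - 1 = 0 + 1 \<and> s = ts 0" using inter_gate[of 0 "k-1" s] s_in t_in k2 by auto
  then show False using ss_ne_ts[of 0] ss0 k2 by auto
qed

lemma Left_sub: "Left j \<subseteq> V" if "j < k" unfolding Left_def by (rule UN_mono) (use that in auto)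
lemma Left_all: "Left (k-1) = V"
proof -
  have "{..k-1} = {..<k}" using k1 by auto
  then show ?thesis unfolding Left_def by simp
qed
lemma Left_mem: "x \<in> Left j \<longleftrightarrow> (\<exists>i\<le>j. x \<in> Vs i)" unfolding Left_def by auto
lemma Right_mem: "x \<in> Right j \<longleftrightarrow> (\<exists>i. j \<le> i \<and> i < k \<and> x \<in> Vs i)" unfolding Right_def by auto

lemma ts_notin_Left: assumes "i < j" "j < k" shows "ts j \<notin> Left i"
proof
  assume "ts j \<in> Left i"
  then obtain m where m: "m \<le> i" "ts j \<in> Vs m" by (auto simp: Left_mem)
  have g: "j = m+1 \<and> ts j = ts m" using inter_gate[of m j "ts j"] m assms ts_in by auto
  show False
  proof (cases "j+1 < k")
    case True
    then show False using inter_gate[of m "j+1" "ts j"] m assms ts_in2 by auto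
  next
    case False
    then have "j = k-1" using assms by simp
    then show False using g ts_ss[of m] ss_ne_ts[of j] assms by auto
  qed
qed

lemma ts_Left: "j < k \<Longrightarrow> ts j \<in> Left j" using ts_in by (auto simp: Left_mem)
lemma s_Left: "s \<in> Left j" using s_in by (auto simp: Left_mem)

lemma ts_inj: assumes "i < k" "j < k" "ts i = ts j" shows "i = j"
proof (rule ccontr)
  assume "i \<noteq> j"
  then have "i < j \<or> j < i" by auto
  then show False using ts_notin_Left ts_Left assms by metis
qed

lemma s_ne_ts: assumes "j < k" shows "ts j \<noteq> s"
proof (cases "j = 0")
  case True then show ?thesis using ss_ne_ts[of 0] ss0 assms by auto
next
  case False then show ?thesis using ts_notin_Left[of 0 j] s_Left[of 0] assms by auto
qed

lemma cross_Left:
  assumes "j+1 < k" "{x,y} \<in> E" "x \<in> Left j" "y \<notin> Left j"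
  shows "x = ts j"
proof -
  obtain m where m: "m < k" "x \<in> Vs m" "y \<in> Vs m" using edge_E2 assms(2) by blast
  have "j < m" using m assms(4) unfolding Left_mem by (meson not_less)
  obtain i where i: "i \<le> j" "x \<in> Vs i" using assms(3) by (auto simp: Left_mem)
  have "m = i+1 \<and> x = ts i" using inter_gate[of i m x] i m \<open>j < m\<close> by auto
  moreover then have "i = j" using i \<open>j < m\<close> by auto
  ultimately show ?thesis by simp
qed

lemma cross_Right:
  assumes "i+1 < k" "{x,y} \<in> E" "x \<in> Right (i+1)" "y \<notin> Right (i+1)"
  shows "x = ts i"
proof -
  obtain m where m: "m < k" "x \<in> Vs m" "y \<in> Vs m" using edge_E2 assms(2) by blast
  have "m \<le> i" using m assms(4) by (auto simp: Right_mem)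
  obtain m' where m': "i+1 \<le> m'" "m' < k" "x \<in> Vs m'" using assms(3) by (auto simp: Right_mem)
  have "m' = m+1 \<and> x = ts m" using inter_gate[of m m' x] m m' \<open>m \<le> i\<close> by auto
  then show ?thesis using m' \<open>m \<le> i\<close> by auto
qed

lemma sep:
  assumes "x \<in> V" "i < k" "x \<notin> Vs i"
  shows "(0 < i \<and> x \<in> Left (i-1) \<and> x \<noteq> ts (i-1)) \<or> (i+1 < k \<and> x \<in> Right (i+1) \<and> x \<noteq> ts i)"
proof -
  obtain m where m: "m < k" "x \<in> Vs m" using assms by auto
  have "m \<noteq> i" using m assms by auto
  then have "m < i \<or> i < m" by auto
  then show ?thesis
  proof
    assume "m < i"
    have "x \<in> Left (i-1)" using m \<open>m < i\<close> unfolding Left_mem by (intro exI[of _ m]) auto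
    then show ?thesis using m assms ss_pred[of i] ss_in[of i] \<open>m < i\<close> by auto
  next
    assume "i < m"
    then show ?thesis using m assms ts_in[of i] by (auto simp: Right_mem)
  qed
qed

lemma Vs_Left: assumes "0 < i" "i < k" "x \<in> Vs i" "x \<in> Left (i-1)" shows "x = ts (i-1)"
proof -
  obtain m where m: "m \<le> i - 1" "x \<in> Vs m" using assms by (auto simp: Left_mem)
  then have "m < i" using assms by simp
  then have "i = m+1 \<and> x = ts m" using inter_gate[of m i x] assms m by auto
  then show ?thesis by simp
qed

lemma Vs_Right: assumes "i+1 < k" "x \<in> Vs i" "x \<in> Right (i+1)" shows "x = ts i"
proof -
  obtain m where "i+1 \<le> m" "m < k" "x \<in> Vs m" using assms by (auto simp: Right_mem)
  then show ?thesis using inter_gate[of i m x] assms by auto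
qed

lemma ts_Right: "i+1 < k \<Longrightarrow> ts i \<in> Right (i+1)" using ts_in2 by (auto simp: Right_mem)

lemma chain_ss:
  assumes "\<forall>m<k. reach F A (ss m) (ts m)" "i < k" "s \<in> A"
  shows "reach F A s (ss i)"
proof -
  have "\<forall>m<i. reach F A (ss m) (ss (Suc m))"
    using assms ts_ss by (metis Suc_eq_plus1 Suc_lessI less_trans_Suc order.strict_trans)
  then show ?thesis using reach_chain[of i F A ss] ss0 assms by simp
qed

lemma chain_t:
  assumes "\<forall>m<k. reach F A (ss m) (ts m)" "s \<in> A"
  shows "reach F A s t"
  using chain_ss[OF assms(1) _ assms(2), of "k-1"] assms(1) k1 tsk reach_trans
  by (metis diff_less zero_less_one)

lemma chain_upto:
  assumes "\<forall>m<i. reach F A (ss m) (ts m)" "i < k" "s \<in> A"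
  shows "reach F A s (ss i)"
proof -
  have "\<forall>m<i. reach F A (ss m) (ss (Suc m))"
  proof (intro allI impI)
    fix m assume "m < i"
    then have "ts m = ss (m+1)" using ts_ss[of m] assms(2) by simp
    moreover have "reach F A (ss m) (ts m)" using assms(1) \<open>m < i\<close> by blast
    ultimately show "reach F A (ss m) (ss (Suc m))" by simp
  qed
  then show ?thesis using reach_chain[of i F A ss] ss0 assms by simp
qed

end


context ser begin


lemma walk_in_V:
  assumes "walk F xs" "F \<subseteq> E" "2 \<le> length xs" shows "set xs \<subseteq> V"
proof
  fix x assume "x \<in> set xs"
  then obtain e where e: "e \<in> F" "x \<in> e" using walk_set_edges[OF assms(1,3)] by blast
  then have "e \<in> E" using assms(2) by blast
  then obtain i a b where "i < k" "e = {a,b}" "a \<in> Vs i" "b \<in> Vs i" using edge_E by blast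
  then show "x \<in> V" using e by auto
qed

lemma ST_glue:
  assumes TE: "T \<subseteq> E" and comps: "\<forall>i<k. T \<inter> Es i \<in> spanning_trees (Vs i) (Es i)"
  shows "T \<in> spanning_trees V E"
proof -
  have conn: "\<forall>i<k. \<forall>x\<in>Vs i. \<forall>y\<in>Vs i. reach T V x y"
  proof (intro allI impI ballI)
    fix i x y assume "i < k" "x \<in> Vs i" "y \<in> Vs i"
    then have "reach (T \<inter> Es i) (Vs i) x y" using comps
      unfolding spanning_trees_def connected_on_reach by blast
    moreover have "Vs i \<subseteq> V" using \<open>i < k\<close> by auto
    ultimately show "reach T V x y" using reach_mono[of "T \<inter> Es i" "Vs i" x y T V] by simp
  qed
  have sx: "reach T V s x" if xV: "x \<in> V" for x
  proof -
    obtain i where i: "i < k" "x \<in> Vs i" using xV by blast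
    have "\<forall>m<k. reach T V (ss m) (ts m)"
    proof (intro allI impI)
      fix m assume "m < k" then show "reach T V (ss m) (ts m)" using conn ss_in ts_in by simp
    qed
    moreover have "s \<in> V" using s_in k1 by auto
    ultimately have "reach T V s (ss i)" using chain_ss i by simp
    moreover have "reach T V (ss i) x" using conn i ss_in by simp
    ultimately show ?thesis by (rule reach_trans)
  qed
  have "connected_on V T"
    unfolding connected_on_reach
  proof (intro ballI)
    fix x y assume xy: "x \<in> V" "y \<in> V"
    have "reach T V x s" by (rule reach_sym[OF sx[OF xy(1)]])
    moreover have "reach T V s y" by (rule sx[OF xy(2)])
    ultimately show "reach T V x y" by (rule reach_trans)
  qed
  moreover have "acyclic_graph T"
    unfolding acyclic_graph_def
  proof
    assume "\<exists>xs. is_cycle T xs"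
    then obtain xs where cy: "is_cycle T xs" by blast
    then obtain a b rest where xs: "xs = a # b # rest"
      unfolding is_cycle_def by (cases xs; cases "tl xs") auto
    have "{a,b} \<in> T" using cy xs unfolding is_cycle_def by simp
    then have "{a,b} \<in> E" using TE by (rule subsetD[rotated])
    then obtain i where i: "i < k" "a \<in> Vs i" "b \<in> Vs i" "a \<noteq> b" using edge_E2 by blast
    have "walk T xs" "2 \<le> length xs" using cy unfolding is_cycle_def by auto
    then have setV: "set xs \<subseteq> V" using walk_in_V TE by blast
    have condT: "\<forall>x y. {x,y} \<in> T \<longrightarrow> x \<in> L \<longrightarrow> y \<notin> L \<longrightarrow> x = c"
      if "\<forall>x y. {x,y} \<in> E \<longrightarrow> x \<in> L \<longrightarrow> y \<notin> L \<longrightarrow> x = c" for L c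
      using that TE by (meson subsetD)
    have sub: "set xs \<subseteq> Vs i"
    proof
      fix x assume x: "x \<in> set xs"
      show "x \<in> Vs i"
      proof (rule ccontr)
        assume nx: "x \<notin> Vs i"
        have "x \<in> V" using setV x by blast
        from sep[OF this i(1) nx]
        consider "0 < i" "x \<in> Left (i-1)" "x \<noteq> ts (i-1)" | "i+1 < k" "x \<in> Right (i+1)" "x \<noteq> ts i"
          by blast
        then show False
        proof cases
          case 1
          have z: "\<exists>z. z \<in> set xs \<and> z \<notin> Left (i-1)"
          proof (cases "a \<in> Left (i-1)")
            case True
            then have "a = ts (i-1)" using Vs_Left[OF 1(1) i(1) i(2)] by blast
            then have "b \<notin> Left (i-1)" using Vs_Left[OF 1(1) i(1) i(3)] i(4) by blast
            then show ?thesis using xs by auto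
          next
            case False then show ?thesis using xs by auto
          qed
          have cond: "\<forall>x y. {x,y} \<in> E \<longrightarrow> x \<in> Left (i-1) \<longrightarrow> y \<notin> Left (i-1) \<longrightarrow> x = ts (i-1)"
          proof (intro allI impI)
            fix x y assume "{x,y} \<in> E" "x \<in> Left (i-1)" "y \<notin> Left (i-1)"
            then show "x = ts (i-1)" using cross_Left[of "i-1" x y] 1 i(1) by simp
          qed
          obtain z where "z \<in> set xs" "z \<notin> Left (i-1)" using z by blast
          have "set xs \<inter> Left (i-1) \<subseteq> {ts (i-1)}"
            by (rule cycle_gate[OF cy \<open>z \<in> set xs\<close> \<open>z \<notin> Left (i-1)\<close> ts_Left condT[OF cond]])
               (use i(1) in simp)
          then show False using 1 x by auto
        next
          case 2
          have z: "\<exists>z. z \<in> set xs \<and> z \<notin> Right (i+1)"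
          proof (cases "a \<in> Right (i+1)")
            case True
            then have "a = ts i" using Vs_Right[OF 2(1) i(2)] by blast
            then have "b \<notin> Right (i+1)" using Vs_Right[OF 2(1) i(3)] i(4) by blast
            then show ?thesis using xs by auto
          next
            case False then show ?thesis using xs by auto
          qed
          have cond: "\<forall>x y. {x,y} \<in> E \<longrightarrow> x \<in> Right (i+1) \<longrightarrow> y \<notin> Right (i+1) \<longrightarrow> x = ts i"
          proof (intro allI impI)
            fix x y assume "{x,y} \<in> E" "x \<in> Right (i+1)" "y \<notin> Right (i+1)"
            then show "x = ts i" using cross_Right[of i x y] 2 by simp
          qed
          obtain z where "z \<in> set xs" "z \<notin> Right (i+1)" using z by blast
          have "set xs \<inter> Right (i+1) \<subseteq> {ts i}"
            by (rule cycle_gate[OF cy \<open>z \<in> set xs\<close> \<open>z \<notin> Right (i+1)\<close> ts_Right[OF 2(1)] condT[OF cond]])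
          then show False using 2 x by auto
        qed
      qed
    qed
    have "is_cycle (T \<inter> Es i) xs"
    proof -
      have "\<forall>x\<in>set xs. \<forall>y\<in>set xs. {x,y} \<in> T \<longrightarrow> {x,y} \<in> T \<inter> Es i"
      proof (intro ballI impI)
        fix x y assume "x \<in> set xs" "y \<in> set xs" "{x,y} \<in> T"
        moreover have "{x,y} \<in> E" using TE \<open>{x,y} \<in> T\<close> by (rule subsetD)
        ultimately show "{x,y} \<in> T \<inter> Es i" using EsE[OF i(1), of x y] sub by auto
      qed
      moreover have "last xs \<in> set xs" "hd xs \<in> set xs" using xs by auto
      ultimately show ?thesis using cy walk_mono_gen[of T xs "T \<inter> Es i"] unfolding is_cycle_def
        by simp
    qed
    moreover have "acyclic_graph (T \<inter> Es i)" using comps i unfolding spanning_trees_def by simp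
    ultimately show False unfolding acyclic_graph_def by blast
  qed
  ultimately show ?thesis using TE unfolding spanning_trees_def by blast
qed

lemma ST_split:
  assumes T: "T \<in> spanning_trees V E" and i: "i < k"
  shows "T \<inter> Es i \<in> spanning_trees (Vs i) (Es i)"
proof -
  have TE: "T \<subseteq> E" and cT: "connected_on V T" and aT: "acyclic_graph T"
    using T unfolding spanning_trees_def by auto
  have condT: "\<forall>x y. {x,y} \<in> T \<longrightarrow> x \<in> L \<longrightarrow> y \<notin> L \<longrightarrow> x = c"
    if "\<forall>x y. {x,y} \<in> E \<longrightarrow> x \<in> L \<longrightarrow> y \<notin> L \<longrightarrow> x = c" for L c
    using that TE by blast
  have "acyclic_graph (T \<inter> Es i)" unfolding acyclic_graph_def
  proof
    assume "\<exists>xs. is_cycle (T \<inter> Es i) xs"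
    then obtain xs where "is_cycle (T \<inter> Es i) xs" by blast
    then have "is_cycle T xs" unfolding is_cycle_def using walk_mono[of "T \<inter> Es i" xs T] by auto
    then show False using aT unfolding acyclic_graph_def by blast
  qed
  moreover have "connected_on (Vs i) (T \<inter> Es i)"
    unfolding connected_on_reach
  proof (intro ballI)
    fix x y assume x: "x \<in> Vs i" and y: "y \<in> Vs i"
    then have "x \<in> V" "y \<in> V" using i by auto
    then have "reach T V x y" using cT unfolding connected_on_reach by blast
    then obtain xs where xs: "walk T xs" "distinct xs" "hd xs = x" "last xs = y" "set xs \<subseteq> V"
      using reach_distinct[of T V x y] by blast
    have sub: "set xs \<subseteq> Vs i"
    proof
      fix z assume z: "z \<in> set xs"
      show "z \<in> Vs i"
      proof (rule ccontr)
        assume nz: "z \<notin> Vs i"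
        have "z \<in> V" using xs z by blast
        from sep[OF this i nz]
        consider "0 < i" "z \<in> Left (i-1)" "z \<noteq> ts (i-1)" | "i+1 < k" "z \<in> Right (i+1)" "z \<noteq> ts i"
          by blast
        then show False
        proof cases
          case 1
          have cond: "\<forall>x y. {x,y} \<in> E \<longrightarrow> x \<in> Left (i-1) \<longrightarrow> y \<notin> Left (i-1) \<longrightarrow> x = ts (i-1)"
          proof (intro allI impI)
            fix x y assume "{x,y} \<in> E" "x \<in> Left (i-1)" "y \<notin> Left (i-1)"
            then show "x = ts (i-1)" using cross_Left[of "i-1" x y] 1 i by simp
          qed
          have "hd xs \<notin> Left (i-1) \<or> hd xs = ts (i-1)" using Vs_Left[OF 1(1) i, of x] x xs(3) by blast
          moreover have "last xs \<notin> Left (i-1) \<or> last xs = ts (i-1)" using Vs_Left[OF 1(1) i, of y] y xs(4) by blast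
          moreover have "ts (i-1) \<in> Left (i-1)" using ts_Left i by simp
          ultimately have "set xs \<inter> Left (i-1) \<subseteq> {ts (i-1)}"
            using path_gate[OF xs(1,2) _ _ _ condT[OF cond]] by blast
          then show False using 1 z by auto
        next
          case 2
          have cond: "\<forall>x y. {x,y} \<in> E \<longrightarrow> x \<in> Right (i+1) \<longrightarrow> y \<notin> Right (i+1) \<longrightarrow> x = ts i"
          proof (intro allI impI)
            fix x y assume "{x,y} \<in> E" "x \<in> Right (i+1)" "y \<notin> Right (i+1)"
            then show "x = ts i" using cross_Right[of i x y] 2 by simp
          qed
          have "hd xs \<notin> Right (i+1) \<or> hd xs = ts i" using Vs_Right[OF 2(1), of x] x xs(3) by blast
          moreover have "last xs \<notin> Right (i+1) \<or> last xs = ts i" using Vs_Right[OF 2(1), of y] y xs(4) by blast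
          ultimately have "set xs \<inter> Right (i+1) \<subseteq> {ts i}"
            using path_gate[OF xs(1,2) _ _ ts_Right[OF 2(1)] condT[OF cond]] by blast
          then show False using 2 z by auto
        qed
      qed
    qed
    have "\<forall>x\<in>set xs. \<forall>y\<in>set xs. {x,y} \<in> T \<longrightarrow> {x,y} \<in> T \<inter> Es i"
    proof (intro ballI impI)
      fix x y assume "x \<in> set xs" "y \<in> set xs" "{x,y} \<in> T"
      moreover have "{x,y} \<in> E" using TE \<open>{x,y} \<in> T\<close> by (rule subsetD)
      ultimately show "{x,y} \<in> T \<inter> Es i" using EsE[OF i, of x y] sub by auto
    qed
    then have "walk (T \<inter> Es i) xs" using walk_mono_gen[OF xs(1)] by blast
    then show "reach (T \<inter> Es i) (Vs i) x y" unfolding reach_def using xs sub by blast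
  qed
  ultimately show ?thesis unfolding spanning_trees_def by blast
qed

lemma glue_Int:
  assumes "\<forall>i<k. Tf i \<subseteq> Es i" "j < k"
  shows "(\<Union>i<k. Tf i) \<inter> Es j = Tf j"
proof
  show "(\<Union>i<k. Tf i) \<inter> Es j \<subseteq> Tf j"
  proof
    fix e assume "e \<in> (\<Union>i<k. Tf i) \<inter> Es j"
    then obtain i where "i < k" "e \<in> Tf i" "e \<in> Es j" by auto
    moreover then have "e \<in> Es i" using assms by auto
    ultimately show "e \<in> Tf j" using Es_disj[of i j] assms by (cases "i = j") auto
  qed
  show "Tf j \<subseteq> (\<Union>i<k. Tf i) \<inter> Es j" using assms by auto
qed

end


definition aut :: "'a set \<Rightarrow> 'a set set \<Rightarrow> ('a \<Rightarrow> 'a) \<Rightarrow> bool" where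
  "aut V F \<sigma> \<longleftrightarrow> bij_betw \<sigma> V V \<and> (\<forall>x\<in>V. \<forall>y\<in>V. {x,y} \<in> F \<longleftrightarrow> {\<sigma> x, \<sigma> y} \<in> F)"

lemma aut_or_aut: "\<sigma> \<in> aut_or V F u v \<Longrightarrow> aut V F \<sigma>"
  unfolding aut_or_def aut_def by blast

lemma reach_aut:
  assumes a: "aut V F \<sigma>" and B: "B \<subseteq> V" and r: "reach F B x y"
  shows "reach F (\<sigma> ` B) (\<sigma> x) (\<sigma> y)"
proof -
  obtain xs where xs: "walk F xs" "hd xs = x" "last xs = y" "set xs \<subseteq> B"
    using r unfolding reach_def by blast
  have ne: "xs \<noteq> []" using xs walk_nonempty by blast
  have "\<forall>a\<in>set xs. \<forall>b\<in>set xs. {a,b} \<in> F \<longrightarrow> {\<sigma> a, \<sigma> b} \<in> F"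
  proof (intro ballI impI)
    fix a b assume "a \<in> set xs" "b \<in> set xs" "{a,b} \<in> F"
    moreover then have "a \<in> V" "b \<in> V" using xs B by auto
    ultimately show "{\<sigma> a, \<sigma> b} \<in> F" using a unfolding aut_def by blast
  qed
  then have "walk F (map \<sigma> xs)" using walk_map xs(1) by blast
  moreover have "hd (map \<sigma> xs) = \<sigma> x" "last (map \<sigma> xs) = \<sigma> y" using ne xs
    by (auto simp: hd_map last_map)
  moreover have "set (map \<sigma> xs) \<subseteq> \<sigma> ` B" using xs by auto
  ultimately show ?thesis unfolding reach_def by blast
qed

lemma aut_inv:
  assumes a: "aut V F \<sigma>" shows "aut V F (inv_into V \<sigma>)"
proof -
  have b: "bij_betw \<sigma> V V" using a unfolding aut_def by blast
  have b': "bij_betw (inv_into V \<sigma>) V V" using bij_betw_inv_into[OF b] .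
  have "{x,y} \<in> F \<longleftrightarrow> {inv_into V \<sigma> x, inv_into V \<sigma> y} \<in> F" if "x \<in> V" "y \<in> V" for x y
  proof -
    have xy: "inv_into V \<sigma> x \<in> V" "inv_into V \<sigma> y \<in> V" using b' that bij_betwE by blast+
    have "\<sigma> (inv_into V \<sigma> x) = x" "\<sigma> (inv_into V \<sigma> y) = y"
      using that b by (auto simp: bij_betw_def f_inv_into_f)
    moreover have "{inv_into V \<sigma> x, inv_into V \<sigma> y} \<in> F \<longleftrightarrow>
        {\<sigma> (inv_into V \<sigma> x), \<sigma> (inv_into V \<sigma> y)} \<in> F"
      using a xy unfolding aut_def by blast
    ultimately show ?thesis by simp
  qed
  then show ?thesis using b' unfolding aut_def by blast
qed

lemma reach_aut_iff:
  assumes a: "aut V F \<sigma>" and B: "B \<subseteq> V" and x: "x \<in> V" and y: "y \<in> V"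
  shows "reach F (\<sigma> ` B) (\<sigma> x) (\<sigma> y) \<longleftrightarrow> reach F B x y"
proof
  assume r: "reach F (\<sigma> ` B) (\<sigma> x) (\<sigma> y)"
  have b: "bij_betw \<sigma> V V" using a unfolding aut_def by blast
  have sB: "\<sigma> ` B \<subseteq> V" using b B bij_betw_imp_surj_on by blast
  have "reach F (inv_into V \<sigma> ` \<sigma> ` B) (inv_into V \<sigma> (\<sigma> x)) (inv_into V \<sigma> (\<sigma> y))"
    using reach_aut[OF aut_inv[OF a] sB r] .
  moreover have "inv_into V \<sigma> ` \<sigma> ` B = B"
    using b B by (simp add: bij_betw_def inv_into_image_cancel)
  moreover have "inv_into V \<sigma> (\<sigma> x) = x" "inv_into V \<sigma> (\<sigma> y) = y"
    using b x y by (auto simp: bij_betw_def inv_into_f_f)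
  ultimately show "reach F B x y" by simp
next
  assume "reach F B x y"
  then show "reach F (\<sigma> ` B) (\<sigma> x) (\<sigma> y)" using reach_aut[OF a B] by blast
qed

lemma aut_image_diff:
  assumes a: "aut V F \<sigma>" and c: "c \<in> V"
  shows "\<sigma> ` (V - {c}) = V - {\<sigma> c}"
proof -
  have b: "bij_betw \<sigma> V V" using a unfolding aut_def by blast
  then have "\<sigma> ` (V - {c}) = \<sigma> ` V - \<sigma> ` {c}"
    using c by (intro inj_on_image_set_diff) (auto simp: bij_betw_def)
  then show ?thesis using b by (simp add: bij_betw_def)
qed

lemma aut_inj: "aut V F \<sigma> \<Longrightarrow> x \<in> V \<Longrightarrow> y \<in> V \<Longrightarrow> \<sigma> x = \<sigma> y \<longleftrightarrow> x = y"
  unfolding aut_def bij_betw_def inj_on_def by blast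

lemma aut_in: "aut V F \<sigma> \<Longrightarrow> x \<in> V \<Longrightarrow> \<sigma> x \<in> V"
  unfolding aut_def using bij_betwE by blast

lemma aut_surj: "aut V F \<sigma> \<Longrightarrow> y \<in> V \<Longrightarrow> \<exists>x\<in>V. \<sigma> x = y"
proof -
  assume "aut V F \<sigma>" "y \<in> V"
  then have "y \<in> \<sigma> ` V" unfolding aut_def bij_betw_def by simp
  then show ?thesis by blast
qed

locale ser2 = ser +
  assumes L3: "\<And>i. i < k \<Longrightarrow> reach (Es i) (Vs i) (ss i) (ts i)"
    and L2: "\<And>i v. i < k \<Longrightarrow> v \<in> Vs i \<Longrightarrow> v \<noteq> ts i \<Longrightarrow> reach (Es i) (Vs i - {ts i}) (ss i) v"
    and NS: "\<And>i c. i < k \<Longrightarrow> c \<in> Vs i \<Longrightarrow> c \<noteq> ss i \<Longrightarrow> c \<noteq> ts i \<Longrightarrow>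
               reach (Es i) (Vs i - {c}) (ss i) (ts i)"
begin

lemma reach_comp: "i < k \<Longrightarrow> v \<in> Vs i \<Longrightarrow> reach (Es i) (Vs i) (ss i) v"
proof -
  assume i: "i < k" and v: "v \<in> Vs i"
  show ?thesis
  proof (cases "v = ts i")
    case True then show ?thesis using L3 i by simp
  next
    case False
    then have "reach (Es i) (Vs i - {ts i}) (ss i) v" using L2 i v by simp
    then show ?thesis using reach_mono[of "Es i" "Vs i - {ts i}" "ss i" v "Es i" "Vs i"] by simp
  qed
qed

lemma lift: "i < k \<Longrightarrow> reach (Es i) B x y \<Longrightarrow> B \<subseteq> A \<Longrightarrow> reach E A x y"
proof -
  assume a: "i < k" "reach (Es i) B x y" "B \<subseteq> A"
  have "Es i \<subseteq> E" using a(1) by auto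
  then show ?thesis using reach_mono[OF a(2) _ a(3)] by simp
qed

definition Pset where "Pset x = {c \<in> V. \<not> reach E (V - {c}) s x}"

lemma P_ts: assumes j: "j < k" shows "Pset (ts j) = insert s (ts ` {..j})"
proof
  show "insert s (ts ` {..j}) \<subseteq> Pset (ts j)"
  proof
    fix c assume c: "c \<in> insert s (ts ` {..j})"
    show "c \<in> Pset (ts j)"
    proof (cases "c = s")
      case True
      have "s \<in> V" using s_in k1 by auto
      moreover have "\<not> reach E (V - {s}) s (ts j)" using reach_in[of E "V - {s}" s "ts j"] by blast
      ultimately show ?thesis using True unfolding Pset_def by simp
    next
      case False
      then obtain i where i: "i \<le> j" "c = ts i" using c by auto
      have "ts i \<in> Vs i" "i < k" using i j ts_in[of i] by auto
      then have cV: "c \<in> V" using i by blast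
      show ?thesis
      proof (cases "i = j")
        case True
        then have "\<not> reach E (V - {c}) s (ts j)" using reach_in[of E "V - {c}" s "ts j"] i by blast
        then show ?thesis using cV unfolding Pset_def by simp
      next
        case False
        then have ij: "i < j" using i by simp
        have "\<not> reach E (V - {ts i}) s (ts j)"
        proof
          assume "reach E (V - {ts i}) s (ts j)"
          then obtain xs where xs: "walk E xs" "hd xs = s" "last xs = ts j" "set xs \<subseteq> V - {ts i}"
            unfolding reach_def by blast
          have cond: "\<forall>x y. {x,y} \<in> E \<longrightarrow> x \<in> Left i \<longrightarrow> y \<notin> Left i \<longrightarrow> x = ts i"
          proof (intro allI impI)
            fix x y assume "{x,y} \<in> E" "x \<in> Left i" "y \<notin> Left i"
            then show "x = ts i" using cross_Left[of i x y] ij j by simp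
          qed
          have "ts i \<in> set xs"
            using crossing[OF xs(1) _ _ cond] xs(2,3) s_Left ts_notin_Left[OF ij j] by simp
          then show False using xs(4) by blast
        qed
        then show ?thesis using cV i unfolding Pset_def by simp
      qed
    qed
  qed
next
  show "Pset (ts j) \<subseteq> insert s (ts ` {..j})"
  proof
    fix c assume c: "c \<in> Pset (ts j)"
    show "c \<in> insert s (ts ` {..j})"
    proof (rule ccontr)
      assume nc: "c \<notin> insert s (ts ` {..j})"
      have cV: "c \<in> V" using c unfolding Pset_def by simp
      have piece: "reach E (V - {c}) (ss m) (ts m)" if m: "m \<le> j" for m
      proof -
        have mk: "m < k" using m j by simp
        have ctm: "c \<noteq> ts m" using nc m by auto
        show ?thesis
        proof (cases "c \<in> Vs m")
          case True
          have "c \<noteq> ss m"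
          proof (cases "m = 0")
            case True then show ?thesis using ss0 nc by auto
          next
            case False
            then have "ss m = ts (m-1)" using ss_pred mk by simp
            moreover have "m - 1 \<le> j" using m by simp
            ultimately show ?thesis using nc by auto
          qed
          then have "reach (Es m) (Vs m - {c}) (ss m) (ts m)" using NS[OF mk True _ ctm] by simp
          moreover have "Vs m - {c} \<subseteq> V - {c}" using mk by auto
          ultimately show ?thesis by (rule lift[OF mk])
        next
          case False
          then have "Vs m \<subseteq> V - {c}" using mk by auto
          then show ?thesis by (rule lift[OF mk L3[OF mk]])
        qed
      qed
      have sA: "s \<in> V - {c}" using nc s_in k1 by auto
      have "\<forall>m<j. reach E (V - {c}) (ss m) (ts m)" using piece by simp
      then have "reach E (V - {c}) s (ss j)"
        using chain_upto[OF _ j sA] by blast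
      then have "reach E (V - {c}) s (ts j)" using reach_trans[OF _ piece[of j]] by blast
      then show False using c unfolding Pset_def by simp
    qed
  qed
qed

lemma card_P_ts: assumes j: "j < k" shows "card (Pset (ts j)) = j + 2"
proof -
  have inj: "inj_on ts {..j}" using ts_inj j unfolding inj_on_def by (meson atMost_iff le_less_trans)
  have "s \<notin> ts ` {..j}"
  proof
    assume "s \<in> ts ` {..j}"
    then obtain m where "m \<le> j" "s = ts m" by auto
    then show False using s_ne_ts[of m] j by simp
  qed
  then have "card (insert s (ts ` {..j})) = Suc (card (ts ` {..j}))" by simp
  also have "card (ts ` {..j}) = Suc j" using card_image[OF inj] by simp
  finally show ?thesis using P_ts[OF j] by simp
qed

lemma P_sub: "Pset x \<subseteq> V" unfolding Pset_def by blast

lemma Pset_aut: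
  assumes a: "aut V E \<sigma>" and ss: "\<sigma> s = s" and x: "x \<in> V"
  shows "Pset (\<sigma> x) = \<sigma> ` Pset x"
proof -
  have sV: "s \<in> V" using s_in k1 by auto
  have key: "reach E (V - {\<sigma> c}) s (\<sigma> x) \<longleftrightarrow> reach E (V - {c}) s x" if c: "c \<in> V" for c
    using reach_aut_iff[OF a _ sV x, of "V - {c}"] aut_image_diff[OF a c] ss by simp
  show ?thesis
  proof
    show "Pset (\<sigma> x) \<subseteq> \<sigma> ` Pset x"
    proof
      fix c' assume c': "c' \<in> Pset (\<sigma> x)"
      then have "c' \<in> V" unfolding Pset_def by simp
      then obtain c where c: "c \<in> V" "\<sigma> c = c'" using aut_surj[OF a] by blast
      then have "c \<in> Pset x" using c' key[OF c(1)] unfolding Pset_def by simp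
      then show "c' \<in> \<sigma> ` Pset x" using c by blast
    qed
  next
    show "\<sigma> ` Pset x \<subseteq> Pset (\<sigma> x)"
    proof
      fix c' assume "c' \<in> \<sigma> ` Pset x"
      then obtain c where c: "c \<in> Pset x" "c' = \<sigma> c" by blast
      then have cV: "c \<in> V" unfolding Pset_def by simp
      then show "c' \<in> Pset (\<sigma> x)" using c key[OF cV] aut_in[OF a cV] unfolding Pset_def by simp
    qed
  qed
qed

lemma gates_fixed:
  assumes A: "\<sigma> \<in> aut_or V E s t" and j: "j < k"
  shows "\<sigma> (ts j) = ts j"
proof -
  have a: "aut V E \<sigma>" by (rule aut_or_aut[OF A])
  have fs: "\<sigma> s = s" and ft: "\<sigma> t = t" using A unfolding aut_or_def by auto
  have km: "k - 1 < k" using k1 by simp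
  have tV: "t \<in> V" using t_in km by blast
  have tjV: "ts j \<in> V" using ts_in j by blast
  have "ts j \<in> Pset t" using P_ts[OF km] tsk j by auto
  then have "\<sigma> (ts j) \<in> \<sigma> ` Pset t" by blast
  also have "\<sigma> ` Pset t = Pset t" using Pset_aut[OF a fs tV] ft by simp
  also have "Pset t = insert s (ts ` {..k-1})" using P_ts[OF km] tsk by simp
  finally have mem: "\<sigma> (ts j) \<in> insert s (ts ` {..k-1})" .
  have "\<sigma> (ts j) \<noteq> s"
  proof
    assume "\<sigma> (ts j) = s"
    then have "\<sigma> (ts j) = \<sigma> s" using fs by simp
    then have "ts j = s" using aut_inj[OF a tjV] s_in k1 by blast
    then show False using s_ne_ts j by blast
  qed
  then obtain m where m: "m \<le> k - 1" "\<sigma> (ts j) = ts m" using mem by auto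
  have mk: "m < k" using m k1 by simp
  have "Pset (ts m) = \<sigma> ` Pset (ts j)" using Pset_aut[OF a fs tjV] m by simp
  moreover have "inj_on \<sigma> (Pset (ts j))"
    using a P_sub unfolding aut_def bij_betw_def by (meson inj_on_subset)
  ultimately have "card (Pset (ts m)) = card (Pset (ts j))" by (simp add: card_image)
  then have "m = j" using card_P_ts[OF mk] card_P_ts[OF j] by simp
  then show ?thesis using m by simp
qed

lemma Left_char:
  assumes j: "j + 1 < k" and v: "v \<in> V"
  shows "v \<in> Left j \<longleftrightarrow> (v = ts j \<or> reach E (V - {ts j}) s v)"
proof
  assume vL: "v \<in> Left j"
  show "v = ts j \<or> reach E (V - {ts j}) s v"
  proof (cases "v = ts j")
    case False
    obtain i where i: "i \<le> j" "v \<in> Vs i" using vL by (auto simp: Left_mem)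
    have ik: "i < k" using i j by simp
    have notin: "ts j \<notin> Vs m" if "m < j" for m
      using ts_notin_Left[OF that] j unfolding Left_mem by auto
    have pieces: "\<forall>m<i. reach E (V - {ts j}) (ss m) (ts m)"
    proof (intro allI impI)
      fix m assume mi: "m < i"
      then have mk: "m < k" using ik by simp
      have "Vs m \<subseteq> V - {ts j}" using notin[of m] mi i mk by auto
      then show "reach E (V - {ts j}) (ss m) (ts m)" by (rule lift[OF mk L3[OF mk]])
    qed
    have sA: "s \<in> V - {ts j}" using s_ne_ts[of j] j s_in k1 by auto
    have r1: "reach E (V - {ts j}) s (ss i)" using chain_upto[OF pieces ik sA] .
    have r2: "reach E (V - {ts j}) (ss i) v"
    proof (cases "i = j")
      case True
      have "reach (Es i) (Vs i - {ts i}) (ss i) v" using L2[OF ik i(2)] False True by simp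
      moreover have "Vs i - {ts i} \<subseteq> V - {ts j}" using True ik by auto
      ultimately show ?thesis by (rule lift[OF ik])
    next
      case ne: False
      then have "i < j" using i by simp
      then have "Vs i \<subseteq> V - {ts j}" using notin[of i] ik by auto
      then show ?thesis by (rule lift[OF ik reach_comp[OF ik i(2)]])
    qed
    show ?thesis using reach_trans[OF r1 r2] by blast
  qed simp
next
  assume h: "v = ts j \<or> reach E (V - {ts j}) s v"
  show "v \<in> Left j"
  proof (cases "v = ts j")
    case True then show ?thesis using ts_Left j by simp
  next
    case False
    then have r: "reach E (V - {ts j}) s v" using h by simp
    show ?thesis
    proof (rule ccontr)
      assume nv: "v \<notin> Left j"
      obtain xs where xs: "walk E xs" "hd xs = s" "last xs = v" "set xs \<subseteq> V - {ts j}"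
        using r unfolding reach_def by blast
      have cond: "\<forall>x y. {x,y} \<in> E \<longrightarrow> x \<in> Left j \<longrightarrow> y \<notin> Left j \<longrightarrow> x = ts j"
      proof (intro allI impI)
        fix x y assume "{x,y} \<in> E" "x \<in> Left j" "y \<notin> Left j"
        then show "x = ts j" using cross_Left[of j x y] j by simp
      qed
      have "ts j \<in> set xs" using crossing[OF xs(1) _ _ cond] xs(2,3) s_Left nv by simp
      then show False using xs(4) by blast
    qed
  qed
qed

lemma Vs_char:
  assumes i: "i < k" and v: "v \<in> V"
  shows "v \<in> Vs i \<longleftrightarrow> v \<in> Left i \<and> (i = 0 \<or> v \<notin> Left (i-1) \<or> v = ts (i-1))"
proof
  assume vi: "v \<in> Vs i"
  have "v \<in> Left i" using vi unfolding Left_mem by blast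
  moreover have "i = 0 \<or> v \<notin> Left (i-1) \<or> v = ts (i-1)"
    using Vs_Left[OF _ i vi] by blast
  ultimately show "v \<in> Left i \<and> (i = 0 \<or> v \<notin> Left (i-1) \<or> v = ts (i-1))" by blast
next
  assume h: "v \<in> Left i \<and> (i = 0 \<or> v \<notin> Left (i-1) \<or> v = ts (i-1))"
  then obtain m where m: "m \<le> i" "v \<in> Vs m" unfolding Left_mem by blast
  show "v \<in> Vs i"
  proof (cases "m = i")
    case True then show ?thesis using m by simp
  next
    case False
    then have mi: "m < i" using m by simp
    then have "v \<in> Left (i-1)" unfolding Left_mem using m by (intro exI[of _ m]) auto
    then have "v = ts (i-1)" using h mi by auto
    then show ?thesis using ss_pred[of i] ss_in[OF i] mi i by simp
  qed
qed

lemma Left_inv: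
  assumes A: "\<sigma> \<in> aut_or V E s t" and j: "j < k" and v: "v \<in> V"
  shows "\<sigma> v \<in> Left j \<longleftrightarrow> v \<in> Left j"
proof -
  have a: "aut V E \<sigma>" by (rule aut_or_aut[OF A])
  have fs: "\<sigma> s = s" using A unfolding aut_or_def by auto
  have sv: "\<sigma> v \<in> V" using aut_in[OF a v] .
  show ?thesis
  proof (cases "j + 1 < k")
    case True
    have tjV: "ts j \<in> V" using ts_in j by blast
    have sV: "s \<in> V" using s_in k1 by blast
    have e1: "\<sigma> v = ts j \<longleftrightarrow> v = ts j"
      using gates_fixed[OF A j] aut_inj[OF a v tjV] by simp
    have e2: "reach E (V - {ts j}) s (\<sigma> v) \<longleftrightarrow> reach E (V - {ts j}) s v"
      using reach_aut_iff[OF a _ sV v, of "V - {ts j}"] aut_image_diff[OF a tjV]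
        gates_fixed[OF A j] fs by simp
    show ?thesis using Left_char[OF True v] Left_char[OF True sv] e1 e2 by simp
  next
    case False
    then have "j = k - 1" using j by simp
    then show ?thesis using Left_all v sv by simp
  qed
qed

lemma Vs_inv:
  assumes A: "\<sigma> \<in> aut_or V E s t" and i: "i < k" and v: "v \<in> V"
  shows "\<sigma> v \<in> Vs i \<longleftrightarrow> v \<in> Vs i"
proof -
  have a: "aut V E \<sigma>" by (rule aut_or_aut[OF A])
  have sv: "\<sigma> v \<in> V" using aut_in[OF a v] .
  have e0: "\<sigma> v \<in> Left i \<longleftrightarrow> v \<in> Left i" using Left_inv[OF A i v] .
  show ?thesis
  proof (cases "i = 0")
    case True then show ?thesis using Vs_char[OF i v] Vs_char[OF i sv] e0 by simp
  next
    case False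
    have im: "i - 1 < k" using i by simp
    have tV: "ts (i-1) \<in> V" using ts_in[OF im] im by blast
    have e1: "\<sigma> v \<in> Left (i-1) \<longleftrightarrow> v \<in> Left (i-1)" using Left_inv[OF A im v] .
    have e2: "\<sigma> v = ts (i-1) \<longleftrightarrow> v = ts (i-1)"
      using gates_fixed[OF A im] aut_inj[OF a v tV] by simp
    show ?thesis using Vs_char[OF i v] Vs_char[OF i sv] e0 e1 e2 by simp
  qed
qed

end


lemma aut_or_in: "\<tau> \<in> aut_or W F u v \<Longrightarrow> x \<in> W \<Longrightarrow> \<tau> x \<in> W"
  unfolding aut_or_def using bij_betwE by blast

lemma aut_or_inj: "\<tau> \<in> aut_or W F u v \<Longrightarrow> x \<in> W \<Longrightarrow> y \<in> W \<Longrightarrow> \<tau> x = \<tau> y \<Longrightarrow> x = y"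
  unfolding aut_or_def bij_betw_def inj_on_def by blast

lemma aut_or_fix: "\<tau> \<in> aut_or W F u v \<Longrightarrow> \<tau> u = u \<and> \<tau> v = v"
  unfolding aut_or_def by blast

lemma aut_or_edge: "\<tau> \<in> aut_or W F u v \<Longrightarrow> x \<in> W \<Longrightarrow> y \<in> W \<Longrightarrow> {x,y} \<in> F \<longleftrightarrow> {\<tau> x, \<tau> y} \<in> F"
  unfolding aut_or_def by blast

lemma aut_or_surj: "\<tau> \<in> aut_or W F u v \<Longrightarrow> w \<in> W \<Longrightarrow> \<exists>x\<in>W. \<tau> x = w"
proof -
  assume "\<tau> \<in> aut_or W F u v" "w \<in> W"
  then have "w \<in> \<tau> ` W" unfolding aut_or_def bij_betw_def by simp
  then show ?thesis by blast
qed

lemma aut_edge_iff: "aut V F \<sigma> \<Longrightarrow> x \<in> V \<Longrightarrow> y \<in> V \<Longrightarrow> ({x,y} \<in> F \<longleftrightarrow> {\<sigma> x, \<sigma> y} \<in> F)"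
  unfolding aut_def by blast

context ser2 begin

lemma aut_restrict:
  assumes A: "\<sigma> \<in> aut_or V E s t" and i: "i < k"
  shows "\<sigma> \<in> aut_or (Vs i) (Es i) (ss i) (ts i)"
proof -
  have a: "aut V E \<sigma>" by (rule aut_or_aut[OF A])
  have sub: "Vs i \<subseteq> V" using i by blast
  have "inj_on \<sigma> V" using a unfolding aut_def bij_betw_def by simp
  then have inj: "inj_on \<sigma> (Vs i)" using inj_on_subset[OF _ sub] by blast
  have img: "\<sigma> ` Vs i = Vs i"
  proof
    show "\<sigma> ` Vs i \<subseteq> Vs i"
    proof
      fix w assume "w \<in> \<sigma> ` Vs i"
      then obtain v where v: "v \<in> Vs i" "w = \<sigma> v" by blast
      then have "v \<in> V" using sub by blast
      then show "w \<in> Vs i" using Vs_inv[OF A i] v by simp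
    qed
    show "Vs i \<subseteq> \<sigma> ` Vs i"
    proof
      fix w assume w: "w \<in> Vs i"
      then have "w \<in> V" using sub by blast
      then obtain v where v: "v \<in> V" "\<sigma> v = w" using aut_surj[OF a] by blast
      then have "v \<in> Vs i" using Vs_inv[OF A i v(1)] w by simp
      then show "w \<in> \<sigma> ` Vs i" using v by blast
    qed
  qed
  have edges: "{x,y} \<in> Es i \<longleftrightarrow> {\<sigma> x, \<sigma> y} \<in> Es i" if xy: "x \<in> Vs i" "y \<in> Vs i" for x y
  proof -
    have sxy: "\<sigma> x \<in> Vs i" "\<sigma> y \<in> Vs i" using img xy by blast+
    have xyV: "x \<in> V" "y \<in> V" using xy sub by blast+
    have "{x,y} \<in> Es i \<longleftrightarrow> {x,y} \<in> E" using EsE[OF i xy] by simp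
    also have "\<dots> \<longleftrightarrow> {\<sigma> x, \<sigma> y} \<in> E" by (rule aut_edge_iff[OF a xyV])
    also have "\<dots> \<longleftrightarrow> {\<sigma> x, \<sigma> y} \<in> Es i" using EsE[OF i sxy] by simp
    finally show ?thesis .
  qed
  have fss: "\<sigma> (ss i) = ss i"
  proof (cases "i = 0")
    case True then show ?thesis using ss0 A unfolding aut_or_def by simp
  next
    case False
    then have "ss i = ts (i-1)" using ss_pred i by simp
    then show ?thesis using gates_fixed[OF A, of "i-1"] i by simp
  qed
  have fts: "\<sigma> (ts i) = ts i" using gates_fixed[OF A i] .
  have b: "bij_betw \<sigma> (Vs i) (Vs i)" using inj img unfolding bij_betw_def by simp
  have e: "\<forall>x\<in>Vs i. \<forall>y\<in>Vs i. {x,y} \<in> Es i \<longleftrightarrow> {\<sigma> x, \<sigma> y} \<in> Es i"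
    by (intro ballI) (rule edges)
  show ?thesis unfolding aut_or_def using b e fss fts by simp
qed

lemma aut_edge:
  assumes "\<tau> \<in> aut_or (Vs i) (Es i) (ss i) (ts i)" "i < k" "e \<in> Es i"
  shows "\<tau> ` e \<in> Es i"
proof -
  obtain x y where xy: "e = {x,y}" "x \<in> Vs i" "y \<in> Vs i" using edge_in assms(2,3) by blast
  have "{\<tau> x, \<tau> y} \<in> Es i" using aut_or_edge[OF assms(1) xy(2,3)] assms(3) xy(1) by simp
  then show ?thesis using xy(1) by simp
qed

lemma act_Int:
  assumes A: "\<sigma> \<in> aut_or V E s t" and TE: "T \<subseteq> E" and i: "i < k"
  shows "act \<sigma> T \<inter> Es i = act \<sigma> (T \<inter> Es i)"
  unfolding act_def
proof
  show "(\<lambda>e. \<sigma> ` e) ` T \<inter> Es i \<subseteq> (\<lambda>e. \<sigma> ` e) ` (T \<inter> Es i)"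
  proof
    fix e' assume "e' \<in> (\<lambda>e. \<sigma> ` e) ` T \<inter> Es i"
    then obtain e where e: "e \<in> T" "e' = \<sigma> ` e" "\<sigma> ` e \<in> Es i" by blast
    then have "e \<in> E" using TE by blast
    then obtain m where m: "m < k" "e \<in> Es m" by blast
    have "\<sigma> ` e \<in> Es m" using aut_edge[OF aut_restrict[OF A m(1)] m] .
    then have "m = i" using Es_disj[OF m(1) i] e(3) by blast
    then show "e' \<in> (\<lambda>e. \<sigma> ` e) ` (T \<inter> Es i)" using e m by blast
  qed
  show "(\<lambda>e. \<sigma> ` e) ` (T \<inter> Es i) \<subseteq> (\<lambda>e. \<sigma> ` e) ` T \<inter> Es i"
    using aut_edge[OF aut_restrict[OF A i] i] by blast
qed

definition glue :: "(nat \<Rightarrow> 'a \<Rightarrow> 'a) \<Rightarrow> 'a \<Rightarrow> 'a" where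
  "glue \<sigma>s x = (if \<exists>i<k. x \<in> Vs i then \<sigma>s (SOME i. i < k \<and> x \<in> Vs i) x else x)"

context
  fixes \<sigma>s :: "nat \<Rightarrow> 'a \<Rightarrow> 'a"
  assumes gs: "\<forall>i<k. \<sigma>s i \<in> aut_or (Vs i) (Es i) (ss i) (ts i)"
begin

lemma gs_i: "i < k \<Longrightarrow> \<sigma>s i \<in> aut_or (Vs i) (Es i) (ss i) (ts i)" using gs by blast

lemma gate_pre:
  assumes i: "i < k" and j: "j < k" and ij: "i \<noteq> j" and x: "x \<in> Vs i" and sx: "\<sigma>s i x \<in> Vs j"
  shows "\<sigma>s i x = x"
proof -
  have a: "\<sigma>s i \<in> aut_or (Vs i) (Es i) (ss i) (ts i)" using gs_i[OF i] .
  have gi: "\<sigma>s i x \<in> Vs i" using aut_or_in[OF a x] .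
  have "\<sigma>s i x = ss i \<or> \<sigma>s i x = ts i" using gate2[OF i j ij gi sx] .
  moreover have "\<sigma>s i (ss i) = ss i" "\<sigma>s i (ts i) = ts i" using aut_or_fix[OF a] by auto
  ultimately have "\<sigma>s i (\<sigma>s i x) = \<sigma>s i x" by auto
  then have "\<sigma>s i x = x" using aut_or_inj[OF a gi x] by simp
  then show ?thesis .
qed

lemma fix_gate_in:
  assumes i: "i < k" and j: "j < k" and ij: "i \<noteq> j" and x: "x \<in> Vs i" "x \<in> Vs j"
  shows "\<sigma>s i x = x"
proof -
  have a: "\<sigma>s i \<in> aut_or (Vs i) (Es i) (ss i) (ts i)" using gs_i[OF i] .
  have "x = ss i \<or> x = ts i" using gate2[OF i j ij x] .
  then show ?thesis using aut_or_fix[OF a] by auto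
qed

lemma glue_eq:
  assumes i: "i < k" and x: "x \<in> Vs i"
  shows "glue \<sigma>s x = \<sigma>s i x"
proof -
  have ex: "\<exists>i. i < k \<and> x \<in> Vs i" using i x by blast
  define m where "m = (SOME i. i < k \<and> x \<in> Vs i)"
  have m: "m < k" "x \<in> Vs m" using someI_ex[OF ex] unfolding m_def by auto
  have g: "glue \<sigma>s x = \<sigma>s m x" unfolding glue_def m_def using ex by auto
  show ?thesis
  proof (cases "m = i")
    case True then show ?thesis using g by simp
  next
    case False
    have "\<sigma>s m x = x" using fix_gate_in[OF m(1) i False m(2) x] .
    moreover have "\<sigma>s i x = x" using fix_gate_in[OF i m(1) _ x m(2)] False by simp
    ultimately show ?thesis using g by simp
  qed
qed

lemma pre_in:
  assumes x: "x \<in> V" and i: "i < k" and gx: "glue \<sigma>s x \<in> Vs i"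
  shows "x \<in> Vs i"
proof -
  obtain a where a: "a < k" "x \<in> Vs a" using x by blast
  have "glue \<sigma>s x = \<sigma>s a x" using glue_eq[OF a] .
  show ?thesis
  proof (cases "a = i")
    case True then show ?thesis using a by simp
  next
    case False
    have "\<sigma>s a x \<in> Vs i" using gx \<open>glue \<sigma>s x = \<sigma>s a x\<close> by simp
    then have "\<sigma>s a x = x" using gate_pre[OF a(1) i False a(2)] by simp
    then show ?thesis using \<open>\<sigma>s a x \<in> Vs i\<close> by simp
  qed
qed

lemma glue_aut: "glue \<sigma>s \<in> aut_or V E s t"
proof -
  let ?g = "glue \<sigma>s"
  have inj: "inj_on ?g V"
  proof (rule inj_onI)
    fix x y assume x: "x \<in> V" and y: "y \<in> V" and eq: "?g x = ?g y"
    obtain a where a: "a < k" "x \<in> Vs a" using x by blast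
    obtain b where b: "b < k" "y \<in> Vs b" using y by blast
    have e: "\<sigma>s a x = \<sigma>s b y" using eq glue_eq[OF a] glue_eq[OF b] by simp
    show "x = y"
    proof (cases "a = b")
      case True
      then show ?thesis using aut_or_inj[OF gs_i[OF a(1)] a(2)] b e by simp
    next
      case False
      have ina: "\<sigma>s a x \<in> Vs a" using aut_or_in[OF gs_i[OF a(1)] a(2)] .
      have inb: "\<sigma>s b y \<in> Vs b" using aut_or_in[OF gs_i[OF b(1)] b(2)] .
      have "\<sigma>s a x = x" using gate_pre[OF a(1) b(1) False a(2)] inb e by simp
      moreover have "\<sigma>s b y = y" using gate_pre[OF b(1) a(1) _ b(2)] ina e False by simp
      ultimately show ?thesis using e by simp
    qed
  qed
  have img: "?g ` V = V"
  proof
    show "?g ` V \<subseteq> V"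
    proof
      fix w assume "w \<in> ?g ` V"
      then obtain x where x: "x \<in> V" "w = ?g x" by blast
      then obtain a where a: "a < k" "x \<in> Vs a" by blast
      have "w = \<sigma>s a x" using x glue_eq[OF a] by simp
      then have "w \<in> Vs a" using aut_or_in[OF gs_i[OF a(1)] a(2)] by simp
      then show "w \<in> V" using a by blast
    qed
    show "V \<subseteq> ?g ` V"
    proof
      fix w assume "w \<in> V"
      then obtain a where a: "a < k" "w \<in> Vs a" by blast
      then obtain x where x: "x \<in> Vs a" "\<sigma>s a x = w" using aut_or_surj[OF gs_i[OF a(1)]] by blast
      have "?g x = w" using glue_eq[OF a(1) x(1)] x by simp
      moreover have "x \<in> V" using a x by blast
      ultimately show "w \<in> ?g ` V" by blast
    qed
  qed
  have edges: "{x,y} \<in> E \<longleftrightarrow> {?g x, ?g y} \<in> E" if x: "x \<in> V" and y: "y \<in> V" for x y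
  proof
    assume "{x,y} \<in> E"
    then obtain i where i: "i < k" "x \<in> Vs i" "y \<in> Vs i" "{x,y} \<in> Es i" using edge_E2 by blast
    have "{\<sigma>s i x, \<sigma>s i y} \<in> Es i" using aut_or_edge[OF gs_i[OF i(1)] i(2,3)] i(4) by simp
    then show "{?g x, ?g y} \<in> E" using glue_eq[OF i(1,2)] glue_eq[OF i(1,3)] i(1) by auto
  next
    assume "{?g x, ?g y} \<in> E"
    then obtain i where i: "i < k" "?g x \<in> Vs i" "?g y \<in> Vs i" "{?g x, ?g y} \<in> Es i"
      using edge_E2 by blast
    have xi: "x \<in> Vs i" using pre_in[OF x i(1) i(2)] .
    have yi: "y \<in> Vs i" using pre_in[OF y i(1) i(3)] .
    have "{\<sigma>s i x, \<sigma>s i y} \<in> Es i" using i(4) glue_eq[OF i(1) xi] glue_eq[OF i(1) yi] by simp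
    then have "{x,y} \<in> Es i" using aut_or_edge[OF gs_i[OF i(1)] xi yi] by simp
    then show "{x,y} \<in> E" using i(1) by blast
  qed
  have fs: "?g s = s"
    using glue_eq[OF k1 s_in] aut_or_fix[OF gs_i[OF k1]] ss0 by simp
  have km: "k - 1 < k" using k1 by simp
  have ft: "?g t = t"
    using glue_eq[OF km t_in] aut_or_fix[OF gs_i[OF km]] tsk by simp
  have b: "bij_betw ?g V V" using inj img unfolding bij_betw_def by simp
  have e: "\<forall>x\<in>V. \<forall>y\<in>V. {x,y} \<in> E \<longleftrightarrow> {?g x, ?g y} \<in> E"
    by (intro ballI) (rule edges)
  show ?thesis unfolding aut_or_def using b e fs ft by simp
qed

lemma act_glue:
  assumes TE: "T \<subseteq> E"
  shows "act (glue \<sigma>s) T = (\<Union>i<k. act (\<sigma>s i) (T \<inter> Es i))"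
proof -
  have eq: "glue \<sigma>s ` e = \<sigma>s i ` e" if i: "i < k" and e: "e \<in> Es i" for i e
  proof -
    obtain x y where xy: "e = {x,y}" "x \<in> Vs i" "y \<in> Vs i" using edge_in i e by blast
    show ?thesis using xy glue_eq[OF i xy(2)] glue_eq[OF i xy(3)] by simp
  qed
  show ?thesis
    unfolding act_def
  proof
    show "(\<lambda>e. glue \<sigma>s ` e) ` T \<subseteq> (\<Union>i<k. (\<lambda>e. \<sigma>s i ` e) ` (T \<inter> Es i))"
    proof
      fix e' assume "e' \<in> (\<lambda>e. glue \<sigma>s ` e) ` T"
      then obtain e where e: "e \<in> T" "e' = glue \<sigma>s ` e" by blast
      then have "e \<in> E" using TE by blast
      then obtain i where i: "i < k" "e \<in> Es i" by blast
      have "e' = \<sigma>s i ` e" using e eq[OF i] by simp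
      then show "e' \<in> (\<Union>i<k. (\<lambda>e. \<sigma>s i ` e) ` (T \<inter> Es i))" using i e by blast
    qed
    show "(\<Union>i<k. (\<lambda>e. \<sigma>s i ` e) ` (T \<inter> Es i)) \<subseteq> (\<lambda>e. glue \<sigma>s ` e) ` T"
    proof
      fix e' assume "e' \<in> (\<Union>i<k. (\<lambda>e. \<sigma>s i ` e) ` (T \<inter> Es i))"
      then obtain i e where i: "i < k" "e \<in> T" "e \<in> Es i" "e' = \<sigma>s i ` e" by blast
      then have "e' = glue \<sigma>s ` e" using eq[OF i(1) i(3)] by simp
      then show "e' \<in> (\<lambda>e. glue \<sigma>s ` e) ` T" using i by blast
    qed
  qed
qed

end

lemma orbit_split:
  assumes TE: "T \<subseteq> E" and TE': "T' \<subseteq> E"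
  shows "T' \<in> orbit (aut_or V E s t) T \<longleftrightarrow>
         (\<forall>i<k. T' \<inter> Es i \<in> orbit (aut_or (Vs i) (Es i) (ss i) (ts i)) (T \<inter> Es i))"
proof
  assume "T' \<in> orbit (aut_or V E s t) T"
  then obtain \<sigma> where A: "\<sigma> \<in> aut_or V E s t" and T': "T' = act \<sigma> T"
    unfolding orbit_def by blast
  show "\<forall>i<k. T' \<inter> Es i \<in> orbit (aut_or (Vs i) (Es i) (ss i) (ts i)) (T \<inter> Es i)"
  proof (intro allI impI)
    fix i assume i: "i < k"
    have "T' \<inter> Es i = act \<sigma> (T \<inter> Es i)" using act_Int[OF A TE i] T' by simp
    then show "T' \<inter> Es i \<in> orbit (aut_or (Vs i) (Es i) (ss i) (ts i)) (T \<inter> Es i)"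
      using aut_restrict[OF A i] unfolding orbit_def by blast
  qed
next
  assume h: "\<forall>i<k. T' \<inter> Es i \<in> orbit (aut_or (Vs i) (Es i) (ss i) (ts i)) (T \<inter> Es i)"
  have "\<forall>i. \<exists>\<tau>. i < k \<longrightarrow> \<tau> \<in> aut_or (Vs i) (Es i) (ss i) (ts i) \<and> T' \<inter> Es i = act \<tau> (T \<inter> Es i)"
  proof
    fix i show "\<exists>\<tau>. i < k \<longrightarrow> \<tau> \<in> aut_or (Vs i) (Es i) (ss i) (ts i) \<and> T' \<inter> Es i = act \<tau> (T \<inter> Es i)"
    proof (cases "i < k")
      case True
      then have "T' \<inter> Es i \<in> orbit (aut_or (Vs i) (Es i) (ss i) (ts i)) (T \<inter> Es i)" using h by simp
      then obtain \<tau> where "\<tau> \<in> aut_or (Vs i) (Es i) (ss i) (ts i)" "T' \<inter> Es i = act \<tau> (T \<inter> Es i)"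
        unfolding orbit_def by blast
      then show ?thesis by blast
    qed simp
  qed
  from choice[OF this] obtain \<sigma>s where \<sigma>s: "\<forall>i. i < k \<longrightarrow> \<sigma>s i \<in> aut_or (Vs i) (Es i) (ss i) (ts i) \<and>
      T' \<inter> Es i = act (\<sigma>s i) (T \<inter> Es i)"
    by blast
  have gs: "\<forall>i<k. \<sigma>s i \<in> aut_or (Vs i) (Es i) (ss i) (ts i)" using \<sigma>s by simp
  have "act (glue \<sigma>s) T = (\<Union>i<k. act (\<sigma>s i) (T \<inter> Es i))" using act_glue[OF gs TE] .
  also have "\<dots> = (\<Union>i<k. T' \<inter> Es i)"
    by (rule SUP_cong[OF refl]) (use \<sigma>s in simp)
  also have "\<dots> = T' \<inter> E" by (rule Int_UN_distrib[symmetric])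
  also have "\<dots> = T'" using TE' by (rule Int_absorb2)
  finally have "T' = act (glue \<sigma>s) T" by simp
  then show "T' \<in> orbit (aut_or V E s t) T" using glue_aut[OF gs] unfolding orbit_def by blast
qed

end


lemma osp_basic:
  "osp V E s t \<Longrightarrow> s \<in> V \<and> t \<in> V \<and> s \<noteq> t \<and> (\<forall>e\<in>E. \<exists>x y. e = {x,y} \<and> x \<noteq> y \<and> x \<in> V \<and> y \<in> V)"
proof (induction rule: osp.induct)
  case (edge s t) then show ?case by blast
next
  case (serial k Vs Es ss ts s t)
  interpret S: ser k Vs Es ss ts s t
  proof
    show "2 \<le> k" by (rule serial.hyps(1))
    show "serial_conds k Vs ss ts s t" by (rule serial.hyps(2))
    fix i assume "i < k"
    then show "ss i \<in> Vs i \<and> ts i \<in> Vs i \<and> ss i \<noteq> ts i \<and>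
        (\<forall>e\<in>Es i. \<exists>x y. e = {x,y} \<and> x \<noteq> y \<and> x \<in> Vs i \<and> y \<in> Vs i)"
      using serial.IH by simp
  qed
  have k1: "0 < k" "k - 1 < k" using S.k1 by auto
  have "s \<in> (\<Union>i<k. Vs i)" using S.s_in k1 by blast
  moreover have "t \<in> (\<Union>i<k. Vs i)" using S.t_in k1 by blast
  moreover have "\<forall>e\<in>(\<Union>i<k. Es i). \<exists>x y. e = {x,y} \<and> x \<noteq> y \<and> x \<in> (\<Union>i<k. Vs i) \<and> y \<in> (\<Union>i<k. Vs i)"
  proof
    fix e assume "e \<in> (\<Union>i<k. Es i)"
    then obtain i x y where "i < k" "e = {x,y}" "x \<noteq> y" "x \<in> Vs i" "y \<in> Vs i"
      using S.edge_E by blast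
    then show "\<exists>x y. e = {x,y} \<and> x \<noteq> y \<and> x \<in> (\<Union>i<k. Vs i) \<and> y \<in> (\<Union>i<k. Vs i)" by blast
  qed
  ultimately show ?case using S.s_ne_t by blast
next
  case (parallel k Vs Es s t)
  have k0: "0 < k" using parallel.hyps(1) by simp
  have b0: "s \<in> Vs 0 \<and> t \<in> Vs 0 \<and> s \<noteq> t" using parallel.IH k0 by blast
  have "\<forall>e\<in>(\<Union>i<k. Es i). \<exists>x y. e = {x,y} \<and> x \<noteq> y \<and> x \<in> (\<Union>i<k. Vs i) \<and> y \<in> (\<Union>i<k. Vs i)"
  proof
    fix e assume "e \<in> (\<Union>i<k. Es i)"
    then obtain i where i: "i < k" "e \<in> Es i" by blast
    then obtain x y where "e = {x,y}" "x \<noteq> y" "x \<in> Vs i" "y \<in> Vs i"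
      using parallel.IH by blast
    then show "\<exists>x y. e = {x,y} \<and> x \<noteq> y \<and> x \<in> (\<Union>i<k. Vs i) \<and> y \<in> (\<Union>i<k. Vs i)" using i by blast
  qed
  then show ?case using b0 k0 by blast
qed

lemma osp_ser:
  assumes "2 \<le> k" "\<forall>i<k. osp (Vs i) (Es i) (ss i) (ts i)" "serial_conds k Vs ss ts s t"
  shows "ser k Vs Es ss ts s t"
proof
  show "2 \<le> k" by (rule assms(1))
  show "serial_conds k Vs ss ts s t" by (rule assms(3))
  fix i assume "i < k"
  then show "ss i \<in> Vs i \<and> ts i \<in> Vs i \<and> ss i \<noteq> ts i \<and>
      (\<forall>e\<in>Es i. \<exists>x y. e = {x,y} \<and> x \<noteq> y \<and> x \<in> Vs i \<and> y \<in> Vs i)"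
  proof -
    have "osp (Vs i) (Es i) (ss i) (ts i)" using assms(2) \<open>i < k\<close> by simp
    from osp_basic[OF this] show ?thesis .
  qed
qed

lemma osp_reach: "osp V E s t \<Longrightarrow> reach E V s t"
proof (induction rule: osp.induct)
  case (edge s t)
  have "walk {{s,t}} [s,t]" by simp
  then show ?case unfolding reach_def by (intro exI[of _ "[s,t]"]) auto
next
  case (serial k Vs Es ss ts s t)
  interpret S: ser k Vs Es ss ts s t
  proof -
    have "\<forall>i<k. osp (Vs i) (Es i) (ss i) (ts i)" using serial.IH by simp
    then show "ser k Vs Es ss ts s t" by (rule osp_ser[OF serial.hyps(1) _ serial.hyps(2)])
  qed
  have "\<forall>m<k. reach (\<Union>i<k. Es i) (\<Union>i<k. Vs i) (ss m) (ts m)"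
  proof (intro allI impI)
    fix m assume m: "m < k"
    then have r: "reach (Es m) (Vs m) (ss m) (ts m)" using serial.IH by simp
    have "Es m \<subseteq> (\<Union>i<k. Es i)" "Vs m \<subseteq> (\<Union>i<k. Vs i)" using m by auto
    then show "reach (\<Union>i<k. Es i) (\<Union>i<k. Vs i) (ss m) (ts m)" by (rule reach_mono[OF r])
  qed
  moreover have "s \<in> (\<Union>i<k. Vs i)" using S.s_in S.k1 by blast
  ultimately show ?case by (rule S.chain_t)
next
  case (parallel k Vs Es s t)
  have k0: "0 < k" using parallel.hyps(1) by simp
  have r: "reach (Es 0) (Vs 0) s t" using parallel.IH k0 by simp
  have "Es 0 \<subseteq> (\<Union>i<k. Es i)" "Vs 0 \<subseteq> (\<Union>i<k. Vs i)" using k0 by auto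
  then show ?case by (rule reach_mono[OF r])
qed

lemma osp_reach2: "osp V E s t \<Longrightarrow> \<forall>v\<in>V. v \<noteq> t \<longrightarrow> reach E (V - {t}) s v"
proof (induction rule: osp.induct)
  case (edge s t)
  show ?case
  proof (intro ballI impI)
    fix v assume "v \<in> {s,t}" "v \<noteq> t"
    then have "v = s" by simp
    moreover have "s \<in> {s,t} - {t}" using edge by simp
    ultimately show "reach {{s,t}} ({s,t} - {t}) s v" using reach_refl[of s "{s,t} - {t}" "{{s,t}}"] by simp
  qed
next
  case (serial k Vs Es ss ts s t)
  interpret S: ser k Vs Es ss ts s t
  proof -
    have "\<forall>i<k. osp (Vs i) (Es i) (ss i) (ts i)" using serial.IH by simp
    then show "ser k Vs Es ss ts s t" by (rule osp_ser[OF serial.hyps(1) _ serial.hyps(2)])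
  qed
  let ?V = "\<Union>i<k. Vs i" and ?E = "\<Union>i<k. Es i"
  have tnot: "t \<notin> Vs m" if "m < k - 1" for m
  proof -
    have "ts (k-1) \<notin> S.Left m" using S.ts_notin_Left[OF that] S.k1 by simp
    then have "t \<notin> S.Left m" using S.tsk by simp
    moreover have "Vs m \<subseteq> S.Left m" unfolding S.Left_def by auto
    ultimately show ?thesis by blast
  qed
  show ?case
  proof (intro ballI impI)
    fix v assume v: "v \<in> ?V" "v \<noteq> t"
    obtain i0 where i0: "i0 < k" "v \<in> Vs i0" using v by blast
    obtain i where i: "i < k" "v \<in> Vs i" "v \<noteq> ts i"
    proof (cases "v = ts i0")
      case False then show ?thesis using that[OF i0] by simp
    next
      case True
      have "i0 \<noteq> k - 1"
      proof
        assume "i0 = k - 1" then show False using True v(2) S.tsk by simp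
      qed
      then have "i0 + 1 < k" using i0 by simp
      have "v \<in> Vs (i0+1)" using True S.ts_in2[OF \<open>i0 + 1 < k\<close>] by simp
      moreover have "v \<noteq> ts (i0+1)" using True S.ts_ss[OF \<open>i0 + 1 < k\<close>] S.ss_ne_ts[OF \<open>i0 + 1 < k\<close>] by simp
      ultimately show ?thesis using that[OF \<open>i0 + 1 < k\<close>] by simp
    qed
    have pieces: "\<forall>m<i. reach ?E (?V - {t}) (ss m) (ts m)"
    proof (intro allI impI)
      fix m assume m: "m < i"
      then have mk: "m < k" using i by simp
      have "osp (Vs m) (Es m) (ss m) (ts m)" using serial.IH mk by simp
      then have r: "reach (Es m) (Vs m) (ss m) (ts m)" by (rule osp_reach)
      have "m < k - 1" using m i by simp
      then have "t \<notin> Vs m" by (rule tnot)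
      then have "Es m \<subseteq> ?E" "Vs m \<subseteq> ?V - {t}" using mk by blast+
      then show "reach ?E (?V - {t}) (ss m) (ts m)" by (rule reach_mono[OF r])
    qed
    have "s \<in> Vs 0" "0 < k" using S.s_in S.k1 by auto
    then have "s \<in> ?V" by blast
    then have sA: "s \<in> ?V - {t}" using S.s_ne_t by simp
    have r1: "reach ?E (?V - {t}) s (ss i)" using S.chain_upto[OF pieces i(1) sA] .
    have "\<forall>v\<in>Vs i. v \<noteq> ts i \<longrightarrow> reach (Es i) (Vs i - {ts i}) (ss i) v" using serial.IH i(1) by simp
    then have r: "reach (Es i) (Vs i - {ts i}) (ss i) v" using i by simp
    have Ei: "Es i \<subseteq> ?E" by (rule UN_upper) (simp add: i(1))
    have Vi: "Vs i \<subseteq> ?V" by (rule UN_upper) (simp add: i(1))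
    have "Vs i - {ts i} \<subseteq> ?V - {t}"
    proof (cases "i = k - 1")
      case True
      then have "ts i = t" using S.tsk by simp
      then show ?thesis using Diff_mono[OF Vi subset_refl[of "{t}"]] by simp
    next
      case False
      then have "i < k - 1" using i by simp
      then have "t \<notin> Vs i" by (rule tnot)
      then have "Vs i - {ts i} \<subseteq> Vs i - {t}" by blast
      also have "\<dots> \<subseteq> ?V - {t}" by (rule Diff_mono[OF Vi subset_refl])
      finally show ?thesis .
    qed
    then have r2: "reach ?E (?V - {t}) (ss i) v" by (rule reach_mono[OF r Ei])
    show "reach ?E (?V - {t}) s v" by (rule reach_trans[OF r1 r2])
  qed
next
  case (parallel k Vs Es s t)
  show ?case
  proof (intro ballI impI)
    fix v assume v: "v \<in> (\<Union>i<k. Vs i)" "v \<noteq> t"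
    then obtain i where i: "i < k" "v \<in> Vs i" by blast
    have "\<forall>v\<in>Vs i. v \<noteq> t \<longrightarrow> reach (Es i) (Vs i - {t}) s v" using parallel.IH i(1) by simp
    then have r: "reach (Es i) (Vs i - {t}) s v" using i v(2) by simp
    have "Es i \<subseteq> (\<Union>i<k. Es i)" "Vs i - {t} \<subseteq> (\<Union>i<k. Vs i) - {t}" using i by auto
    then show "reach (\<Union>i<k. Es i) ((\<Union>i<k. Vs i) - {t}) s v" by (rule reach_mono[OF r])
  qed
qed

lemma osp_NS:
  assumes o: "osp V E s t" and ns: "\<not> serial_superedge V E s t"
    and c: "c \<in> V" "c \<noteq> s" "c \<noteq> t"
  shows "reach E (V - {c}) s t"
  using o
proof (cases rule: osp.cases)
  case edge then show ?thesis using c by auto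
next
  case (serial k Vs Es ss ts)
  then have "serial_superedge V E s t" unfolding serial_superedge_def by blast
  then show ?thesis using ns by blast
next
  case (parallel k Vs Es)
  have "c \<in> (\<Union>i<k. Vs i)" using c(1) parallel(1) by simp
  then obtain j where j: "j < k" "c \<in> Vs j" by blast
  define j' where "j' = (if j = 0 then 1 else (0::nat))"
  have j': "j' < k" "j' \<noteq> j" using parallel(3) unfolding j'_def by auto
  have "c \<notin> Vs j'"
  proof
    assume "c \<in> Vs j'"
    then have "c \<in> Vs j \<inter> Vs j'" using j by simp
    moreover have "Vs j \<inter> Vs j' = {s,t}" using parallel(5) j(1) j' by simp
    ultimately have "c \<in> {s,t}" by simp
    then show False using c by simp
  qed
  have "osp (Vs j') (Es j') s t" using parallel(4) j' by simp
  then have r: "reach (Es j') (Vs j') s t" by (rule osp_reach)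
  have Ej: "Es j' \<subseteq> E" unfolding parallel(2) by (rule UN_upper) (simp add: j'(1))
  have Vj: "Vs j' \<subseteq> V" unfolding parallel(1) by (rule UN_upper) (simp add: j'(1))
  have "Vs j' \<subseteq> V - {c}" using Vj \<open>c \<notin> Vs j'\<close> by blast
  then show ?thesis by (rule reach_mono[OF r Ej])
qed


theorem theorem5p4:
  fixes k :: nat and Vs :: "nat \<Rightarrow> 'a set" and Es :: "nat \<Rightarrow> 'a set set"
    and ss ts :: "nat \<Rightarrow> 'a" and s t :: 'a
    and \<T> :: "nat \<Rightarrow> 'a set set set"
  assumes "2 \<le> k"
    and "\<forall>i<k. osp (Vs i) (Es i) (ss i) (ts i)"
    and "\<forall>i<k. \<not> serial_superedge (Vs i) (Es i) (ss i) (ts i)"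
    and "serial_conds k Vs ss ts s t"
    and "\<forall>i<k. orbit_transversal (aut_or (Vs i) (Es i) (ss i) (ts i))
                 (spanning_trees (Vs i) (Es i)) (\<T> i)"
  shows "{(\<Union>i<k. T i) | T. \<forall>i<k. T i \<in> \<T> i}
           \<subseteq> spanning_trees (\<Union>i<k. Vs i) (\<Union>i<k. Es i)
       \<and> orbit_transversal (aut_or (\<Union>i<k. Vs i) (\<Union>i<k. Es i) s t)
           (spanning_trees (\<Union>i<k. Vs i) (\<Union>i<k. Es i))
           {(\<Union>i<k. T i) | T. \<forall>i<k. T i \<in> \<T> i}"
proof -
  have ser: "ser k Vs Es ss ts s t" by (rule osp_ser[OF assms(1) assms(2) assms(4)])
  have ospi: "osp (Vs i) (Es i) (ss i) (ts i)" if "i < k" for i using assms(2) that by simp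
  interpret S: ser2 k Vs Es ss ts s t
  proof (rule ser2.intro[OF ser], rule ser2_axioms.intro)
    fix i assume i: "i < k"
    show "reach (Es i) (Vs i) (ss i) (ts i)" by (rule osp_reach[OF ospi[OF i]])
  next
    fix i v assume i: "i < k" and v: "v \<in> Vs i" "v \<noteq> ts i"
    show "reach (Es i) (Vs i - {ts i}) (ss i) v" using osp_reach2[OF ospi[OF i]] v by simp
  next
    fix i c assume i: "i < k" and c: "c \<in> Vs i" "c \<noteq> ss i" "c \<noteq> ts i"
    have ns: "\<not> serial_superedge (Vs i) (Es i) (ss i) (ts i)" using assms(3) i by simp
    show "reach (Es i) (Vs i - {c}) (ss i) (ts i)" by (rule osp_NS[OF ospi[OF i] ns c])
  qed
  let ?V = "\<Union>i<k. Vs i" and ?E = "\<Union>i<k. Es i"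
  let ?A = "aut_or ?V ?E s t"
  let ?ST = "spanning_trees ?V ?E"
  let ?R = "{(\<Union>i<k. T i) | T. \<forall>i<k. T i \<in> \<T> i}"
  have Tsub: "\<T> i \<subseteq> spanning_trees (Vs i) (Es i)" if "i < k" for i
    using assms(5) that unfolding orbit_transversal_def by simp
  have Tuniq: "\<exists>!T'. T' \<in> \<T> i \<and> T' \<in> orbit (aut_or (Vs i) (Es i) (ss i) (ts i)) X"
    if "i < k" "X \<in> spanning_trees (Vs i) (Es i)" for i X
    using assms(5) that unfolding orbit_transversal_def by simp
  have STsub: "X \<subseteq> Es i" if "X \<in> spanning_trees (Vs i) (Es i)" for i X
    using that unfolding spanning_trees_def by simp
  have famE: "(\<Union>i<k. Tf i) \<subseteq> ?E" if "\<forall>i<k. Tf i \<subseteq> Es i" for Tf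
    by (rule UN_mono) (use that in simp_all)
  have R_ST: "?R \<subseteq> ?ST"
  proof
    fix X assume "X \<in> ?R"
    then obtain Tf where X: "X = (\<Union>i<k. Tf i)" and Tf: "\<forall>i<k. Tf i \<in> \<T> i" by blast
    have Tf': "\<forall>i<k. Tf i \<subseteq> Es i"
    proof (intro allI impI)
      fix i assume i: "i < k"
      then have "Tf i \<in> spanning_trees (Vs i) (Es i)" using Tf Tsub[OF i] by blast
      then show "Tf i \<subseteq> Es i" by (rule STsub)
    qed
    have XE: "X \<subseteq> ?E" using famE[OF Tf'] X by simp
    have "\<forall>i<k. X \<inter> Es i \<in> spanning_trees (Vs i) (Es i)"
    proof (intro allI impI)
      fix i assume i: "i < k"
      have "X \<inter> Es i = Tf i" using S.glue_Int[OF Tf' i] X by simp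
      then show "X \<inter> Es i \<in> spanning_trees (Vs i) (Es i)" using Tf Tsub[OF i] i by auto
    qed
    then show "X \<in> ?ST" by (rule S.ST_glue[OF XE])
  qed
  have main: "\<forall>T\<in>?ST. \<exists>!T'. T' \<in> ?R \<and> T' \<in> orbit ?A T"
  proof
    fix T assume T: "T \<in> ?ST"
    have TE: "T \<subseteq> ?E" using T unfolding spanning_trees_def by simp
    have Ti: "T \<inter> Es i \<in> spanning_trees (Vs i) (Es i)" if "i < k" for i
      by (rule S.ST_split[OF T that])
    have "\<forall>i. \<exists>U. i < k \<longrightarrow> U \<in> \<T> i \<and> U \<in> orbit (aut_or (Vs i) (Es i) (ss i) (ts i)) (T \<inter> Es i)"
    proof
      fix i
      show "\<exists>U. i < k \<longrightarrow> U \<in> \<T> i \<and> U \<in> orbit (aut_or (Vs i) (Es i) (ss i) (ts i)) (T \<inter> Es i)"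
      proof (cases "i < k")
        case True
        then show ?thesis using Tuniq[OF True Ti[OF True]] by blast
      qed simp
    qed
    from choice[OF this] obtain Tc where Tc:
      "\<forall>i. i < k \<longrightarrow> Tc i \<in> \<T> i \<and> Tc i \<in> orbit (aut_or (Vs i) (Es i) (ss i) (ts i)) (T \<inter> Es i)"
      by blast
    define X where "X = (\<Union>i<k. Tc i)"
    have Tc': "\<forall>i<k. Tc i \<subseteq> Es i"
    proof (intro allI impI)
      fix i assume i: "i < k"
      then have "Tc i \<in> spanning_trees (Vs i) (Es i)" using Tc Tsub[OF i] by blast
      then show "Tc i \<subseteq> Es i" by (rule STsub)
    qed
    have XR: "X \<in> ?R" unfolding X_def using Tc by blast
    have XE: "X \<subseteq> ?E" unfolding X_def by (rule famE[OF Tc'])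
    have XI: "X \<inter> Es i = Tc i" if "i < k" for i
      unfolding X_def by (rule S.glue_Int[OF Tc' that])
    have XO: "X \<in> orbit ?A T"
    proof -
      have "\<forall>i<k. X \<inter> Es i \<in> orbit (aut_or (Vs i) (Es i) (ss i) (ts i)) (T \<inter> Es i)"
        using Tc XI by simp
      then show ?thesis using S.orbit_split[OF TE XE] by simp
    qed
    show "\<exists>!T'. T' \<in> ?R \<and> T' \<in> orbit ?A T"
    proof (rule ex1I[of _ X])
      show "X \<in> ?R \<and> X \<in> orbit ?A T" using XR XO by simp
    next
      fix Y assume Y: "Y \<in> ?R \<and> Y \<in> orbit ?A T"
      then obtain U where YU: "Y = (\<Union>i<k. U i)" and U: "\<forall>i<k. U i \<in> \<T> i" by blast
      have U': "\<forall>i<k. U i \<subseteq> Es i"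
      proof (intro allI impI)
        fix i assume i: "i < k"
        then have "U i \<in> spanning_trees (Vs i) (Es i)" using U Tsub[OF i] by blast
        then show "U i \<subseteq> Es i" by (rule STsub)
      qed
      have YE: "Y \<subseteq> ?E" using famE[OF U'] YU by simp
      have YO: "\<forall>i<k. Y \<inter> Es i \<in> orbit (aut_or (Vs i) (Es i) (ss i) (ts i)) (T \<inter> Es i)"
        using S.orbit_split[OF TE YE] Y by simp
      have "U i = Tc i" if i: "i < k" for i
      proof -
        have YU_i: "Y \<inter> Es i = U i" using S.glue_Int[OF U' i] YU by simp
        have "Y \<inter> Es i \<in> orbit (aut_or (Vs i) (Es i) (ss i) (ts i)) (T \<inter> Es i)" using YO i by blast
        then have "U i \<in> orbit (aut_or (Vs i) (Es i) (ss i) (ts i)) (T \<inter> Es i)" by (simp only: YU_i)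
        moreover have "U i \<in> \<T> i" using U i by simp
        moreover have "Tc i \<in> \<T> i" "Tc i \<in> orbit (aut_or (Vs i) (Es i) (ss i) (ts i)) (T \<inter> Es i)"
          using Tc i by simp_all
        ultimately show ?thesis using Tuniq[OF i Ti[OF i]] by blast
      qed
      then have "(\<Union>i<k. U i) = (\<Union>i<k. Tc i)" by (intro SUP_cong refl) simp
      then show "Y = X" using YU X_def by simp
    qed
  qed
  show ?thesis using R_ST main unfolding orbit_transversal_def by blast
qed

end
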